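(* Let $W:\mathbb{T}\to(-\infty,\infty]$ satisfy (H1)–(H4), let $\alpha\ge0$ and $0<d\le1$. Let $\rho$ be an even minimizer of $\mathcal{G}_\alpha$ over $\mathcal{M}_{\mathcal{D}\ge d}$ such that $I=[-M,M]$ satisfies $\mathcal{D}[\rho]=\rho(I)-|I|$. Then $(W*\rho)(x)\le\operatorname{ess\,inf}(W*\rho)$ for every $x\in\operatorname{supp}\rho\setminus\{\pm M\}$.
   Context: $\mathbb{T}=\mathbb{R}/\mathbb{Z}$ with Lebesgue measure $|\cdot|$. Hypotheses on $W$: (H1) $W\in L^1(\mathbb{T})\cap C^2(\mathbb{T}\setminus\{0\})$, $\int W=0$; (H2) $W$ even; (H3) $\lim_{x\to0}W(x)=W(0)=\infty$; (H4) $W''\ge C_1>0$ on $\mathbb{T}\setminus\{0\}$. $(W*\rho)(x)=\int W(x-y)\,d\rho(y)$; $\mathcal{H}[\rho]=-\operatorname{ess\,inf}(W*\rho)$; $\mathcal{D}[\rho]=\sup_I(\rho(I)-|I|)$ over closed arcs; $\mathcal{G}_\alpha=\mathcal{H}/\mathcal{D}^\alpha$; $\mathcal{M}_{\mathcal{D}\ge d}$ is the set of Borel probability measures with $\mathcal{D}\ge d$; even means $\rho(A)=\rho(-A)$. *)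

theory Defs
  imports "HOL-Probability.Probability"
begin

text \<open>Model of the torus T = R/Z: points are represented by reals, and the
  canonical representative of the class of x is frac x in [0,1).
  A kernel W on T is a 1-periodic function real => ereal.
  A Borel probability measure on T is a probability measure on the Borel sets
  of the real line concentrated on the fundamental domain [0,1).\<close>

definition torus_prob :: "real measure \<Rightarrow> bool" where
  "torus_prob \<rho> \<longleftrightarrow> prob_space \<rho> \<and> sets \<rho> = sets borel \<and> emeasure \<rho> {0..<1} = 1"

text \<open>Hypotheses (H1)-(H4), plus the standing convention that W lives on T
  (1-periodicity).  Finite-valuedness off 0 is implicit in (H1) (C^2 on T minus 0).\<close>

definition W_hyps :: "(real \<Rightarrow> ereal) \<Rightarrow> bool" where
  "W_hyps W \<longleftrightarrow>
     (\<forall>x. W (x + 1) = W x) \<and>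
     \<comment> \<open>(H1)\<close>
     (\<forall>x. x \<notin> \<int> \<longrightarrow> \<bar>W x\<bar> \<noteq> \<infinity>) \<and>
     set_integrable lborel {0..1} (\<lambda>x. real_of_ereal (W x)) \<and>
     (LINT x:{0..1}|lborel. real_of_ereal (W x)) = 0 \<and>
     (\<exists>W' W''. (\<forall>x. x \<notin> \<int> \<longrightarrow>
         ((\<lambda>y. real_of_ereal (W y)) has_real_derivative W' x) (at x) \<and>
         (W' has_real_derivative W'' x) (at x) \<and> isCont W'' x)
       \<comment> \<open>(H4)\<close>
       \<and> (\<exists>C1>0. \<forall>x. x \<notin> \<int> \<longrightarrow> W'' x \<ge> C1)) \<and>
     \<comment> \<open>(H2)\<close>
     (\<forall>x. W (- x) = W x) \<and>
     \<comment> \<open>(H3)\<close>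
     W 0 = \<infinity> \<and> (W \<longlongrightarrow> \<infinity>) (at 0)"

definition conv :: "(real \<Rightarrow> ereal) \<Rightarrow> real measure \<Rightarrow> real \<Rightarrow> ereal" where
  "conv W \<rho> x =
     enn2ereal (\<integral>\<^sup>+ y. e2ennreal (W (x - y)) \<partial>\<rho>)
     - enn2ereal (\<integral>\<^sup>+ y. e2ennreal (- W (x - y)) \<partial>\<rho>)"

definition ess_inf_T :: "(real \<Rightarrow> ereal) \<Rightarrow> ereal" where
  "ess_inf_T f = Sup {c. AE x in lborel. x \<in> {0..<1} \<longrightarrow> c \<le> f x}"

definition HH :: "(real \<Rightarrow> ereal) \<Rightarrow> real measure \<Rightarrow> ereal" where
  "HH W \<rho> = - ess_inf_T (conv W \<rho>)"

text \<open>Closed arcs of T are the images frac ` [a,b] with 0 <= b - a <= 1;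
  their length is b - a.\<close>

definition DD :: "real measure \<Rightarrow> real" where
  "DD \<rho> = (SUP ab \<in> {(a, b). a \<le> b \<and> b - a \<le> 1}.
              measure \<rho> (frac ` {fst ab..snd ab}) - (snd ab - fst ab))"

definition GG :: "real \<Rightarrow> (real \<Rightarrow> ereal) \<Rightarrow> real measure \<Rightarrow> ereal" where
  "GG \<alpha> W \<rho> = HH W \<rho> / ereal (DD \<rho> powr \<alpha>)"

definition M_D_ge :: "real \<Rightarrow> real measure set" where
  "M_D_ge d = {\<rho>. torus_prob \<rho> \<and> DD \<rho> \<ge> d}"

definition even_meas :: "real measure \<Rightarrow> bool" where
  "even_meas \<rho> \<longleftrightarrow> distr \<rho> borel (\<lambda>y. frac (- y)) = \<rho>"

definition supp_T :: "real measure \<Rightarrow> real set" where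
  "supp_T \<rho> = {x \<in> {0..<1}. \<forall>e>0. emeasure \<rho> (frac ` ball x e) > 0}"

end

theory Submission
  imports Defs
begin

lemma W_hypsD:
  assumes "W_hyps W"
  shows W_per1: "\<And>x. W (x + 1) = W x"
  and W_finD: "\<And>x. x \<notin> \<int> \<Longrightarrow> \<bar>W x\<bar> \<noteq> \<infinity>"
  and W_int: "set_integrable lborel {0..1} (\<lambda>x. real_of_ereal (W x))"
  and W_int0: "(LINT x:{0..1}|lborel. real_of_ereal (W x)) = 0"
  and W_deriv: "\<exists>W' W''. (\<forall>x. x \<notin> \<int> \<longrightarrow>
         ((\<lambda>y. real_of_ereal (W y)) has_real_derivative W' x) (at x) \<and>
         (W' has_real_derivative W'' x) (at x) \<and> isCont W'' x)
       \<and> (\<exists>C1>0. \<forall>x. x \<notin> \<int> \<longrightarrow> W'' x \<ge> C1)"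
  and W_even: "\<And>x. W (- x) = W x"
  and W_0: "W 0 = \<infinity>"
  and W_lim0: "(W \<longlongrightarrow> \<infinity>) (at 0)"
proof -
  note A = assms[unfolded W_hyps_def]
  note B = A[THEN conjunct2, THEN conjunct2, THEN conjunct2, THEN conjunct2]
  show "\<And>x. W (x + 1) = W x" by (rule A[THEN conjunct1, rule_format])
  show "\<And>x. x \<notin> \<int> \<Longrightarrow> \<bar>W x\<bar> \<noteq> \<infinity>" by (rule A[THEN conjunct2, THEN conjunct1, rule_format])
  show "set_integrable lborel {0..1} (\<lambda>x. real_of_ereal (W x))" using A[THEN conjunct2, THEN conjunct2, THEN conjunct1] .
  show "(LINT x:{0..1}|lborel. real_of_ereal (W x)) = 0" using A[THEN conjunct2, THEN conjunct2, THEN conjunct2, THEN conjunct1] .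
  show "\<exists>W' W''. (\<forall>x. x \<notin> \<int> \<longrightarrow>
         ((\<lambda>y. real_of_ereal (W y)) has_real_derivative W' x) (at x) \<and>
         (W' has_real_derivative W'' x) (at x) \<and> isCont W'' x)
       \<and> (\<exists>C1>0. \<forall>x. x \<notin> \<int> \<longrightarrow> W'' x \<ge> C1)" using B[THEN conjunct1] .
  show "\<And>x. W (- x) = W x" by (rule B[THEN conjunct2, THEN conjunct1, rule_format])
  show "W 0 = \<infinity>" using B[THEN conjunct2, THEN conjunct2, THEN conjunct1] .
  show "(W \<longlongrightarrow> \<infinity>) (at 0)" using B[THEN conjunct2, THEN conjunct2, THEN conjunct2] .
qed

lemma W_per_int:
  assumes "W_hyps W" shows "W (x + of_int k) = W x"
proof -
  have per: "\<And>x. W (x + 1) = W x" by (rule W_per1[OF assms])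
  have pos: "W (x + of_nat n) = W x" for x n
  proof (induction n arbitrary: x)
    case (Suc n)
    have "x + of_nat (Suc n) = (x + 1) + of_nat n" by simp
    then have "W (x + of_nat (Suc n)) = W ((x + 1) + of_nat n)" by (simp only:)
    also have "\<dots> = W (x + 1)" by (rule Suc.IH)
    also have "\<dots> = W x" by (rule per)
    finally show ?case .
  qed simp
  show ?thesis
  proof (cases "k \<ge> 0")
    case True
    then have "(of_int k::real) = of_nat (nat k)" by simp
    then have "W (x + of_int k) = W (x + of_nat (nat k))" by (simp only:)
    also have "\<dots> = W x" by (rule pos)
    finally show ?thesis .
  next
    case False
    have n: "(of_nat (nat (-k))::real) = of_int (-k)" by (rule of_nat_nat) (use False in linarith)
    have e: "x + of_int k + of_nat (nat (-k)) = x" using n by linarith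
    have "W x = W (x + of_int k + of_nat (nat (-k)))" by (simp only: e)
    also have "\<dots> = W (x + of_int k)" by (rule pos)
    finally show ?thesis by (rule sym)
  qed
qed

lemma W_per_Ints:
  assumes "W_hyps W" "x - x' \<in> \<int>" shows "W x = W x'"
proof -
  obtain k where "x - x' = of_int k" using assms(2) Ints_cases by metis
  then have "x = x' + of_int k" by simp
  then show ?thesis using W_per_int[OF assms(1)] by simp
qed

lemma W_Ints: assumes "W_hyps W" "x \<in> \<int>" shows "W x = \<infinity>"
proof -
  have "W (x - x) = \<infinity>" using W_0[OF assms(1)] by simp
  moreover have "W x = W (x - x)" by (rule W_per_Ints[OF assms(1)]) (simp add: assms(2))
  ultimately show ?thesis by simp
qed

lemma W_fin: assumes "W_hyps W" "x \<notin> \<int>" shows "W x = ereal (real_of_ereal (W x))"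
  using W_finD[OF assms] by (cases "W x") simp_all

lemma not_Ints_between: "of_int k < y \<Longrightarrow> y < of_int k + 1 \<Longrightarrow> (y::real) \<notin> \<int>"
proof
  assume a: "of_int k < y" "y < of_int k + 1" "y \<in> \<int>"
  then obtain n where n: "y = of_int n" using Ints_cases by metis
  from a n have "k < n" "n < k + 1" by linarith+
  then show False by linarith
qed

lemma W_isCont: assumes "W_hyps W" shows "isCont W x"
proof (cases "x \<in> \<int>")
  case True
  have Wx: "W x = \<infinity>" using W_Ints[OF assms True] .
  have "(\<lambda>h. W (x + h)) = W"
  proof
    fix h show "W (x + h) = W h" by (rule W_per_Ints[OF assms]) (simp add: True)
  qed
  then have "(\<lambda>h. W (x + h)) \<midarrow>0\<rightarrow> \<infinity>" using W_lim0[OF assms] by simp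
  then have "W \<midarrow>x\<rightarrow> \<infinity>"
  proof (cases "x = 0")
    case True
    then show ?thesis using W_lim0[OF assms] by simp
  next
    case False
    then show ?thesis using LIM_offset_zero_iff[of x W] \<open>(\<lambda>h. W (x + h)) \<midarrow>0\<rightarrow> \<infinity>\<close> by simp
  qed
  then show ?thesis unfolding isCont_def Wx .
next
  case False
  obtain W' W'' where D: "\<And>x. x \<notin> \<int> \<Longrightarrow> ((\<lambda>y. real_of_ereal (W y)) has_real_derivative W' x) (at x)"
    using W_deriv[OF assms] by blast
  have c: "isCont (\<lambda>y. real_of_ereal (W y)) x" using D[OF False] by (rule DERIV_isCont)
  then have c2: "((\<lambda>y. ereal (real_of_ereal (W y))) \<longlongrightarrow> ereal (real_of_ereal (W x))) (at x)"
    unfolding isCont_def by (rule tendsto_ereal)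
  have fl: "floor x < x" "x < floor x + 1"
  proof -
    have "of_int (floor x) \<le> x" by (rule of_int_floor_le)
    moreover have "of_int (floor x) \<noteq> x" using False by (metis Ints_of_int)
    ultimately show "floor x < x" by linarith
    show "x < floor x + 1" by linarith
  qed
  have ev: "eventually (\<lambda>y. ereal (real_of_ereal (W y)) = W y) (at x)"
  proof -
    have "eventually (\<lambda>y. floor x < y) (at x)"
      using order_tendstoD(1)[OF tendsto_ident_at fl(1)] .
    moreover have "eventually (\<lambda>y. y < floor x + 1) (at x)"
      using order_tendstoD(2)[OF tendsto_ident_at fl(2)] .
    ultimately show ?thesis
    proof eventually_elim
      case (elim y)
      then have "y \<notin> \<int>" using not_Ints_between[of "floor x" y] by simp
      then show ?case using W_fin[OF assms] by metis
    qed
  qed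
  have "(W \<longlongrightarrow> W x) (at x)"
    using tendsto_cong[OF ev] c2 W_fin[OF assms False] by simp
  then show ?thesis unfolding isCont_def .
qed

lemma W_bdd: assumes "W_hyps W" shows "\<exists>B\<ge>0. \<forall>x. - ereal B \<le> W x"
proof -
  have "continuous_on {0..1} W"
    using W_isCont[OF assms] by (simp add: continuous_at_imp_continuous_on)
  then obtain x1 where x1: "x1 \<in> {0..1}" "\<And>y. y \<in> {0..1} \<Longrightarrow> W x1 \<le> W y"
    using continuous_attains_inf[of "{0..1}" W] by auto
  have nm: "W x1 \<noteq> - \<infinity>"
    using W_Ints[OF assms, of x1] W_fin[OF assms, of x1] by (cases "x1 \<in> \<int>") auto
  define B where "B = (if W x1 = \<infinity> then 0 else max 0 (- real_of_ereal (W x1)))"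
  have B1: "- ereal B \<le> W x1" using nm unfolding B_def by (cases "W x1") (auto simp: max_def)
  show ?thesis
  proof (intro exI[of _ B] conjI allI)
    show "0 \<le> B" unfolding B_def by auto
    fix x
    have "W x = W (frac x)" by (rule W_per_Ints[OF assms]) (simp add: frac_def)
    moreover have "frac x \<in> {0..1}" using frac_lt_1[of x] frac_ge_0[of x] by auto
    ultimately show "- ereal B \<le> W x" using x1(2) B1 by (metis order.trans)
  qed
qed

lemma Ints_01: "0 < (x::real) \<Longrightarrow> x < 1 \<Longrightarrow> x \<notin> \<int>"
  using not_Ints_between[of 0 x] by simp

lemma W_convex: assumes "W_hyps W"
  shows "\<exists>C1>0. \<forall>a u. 0 \<le> u \<longrightarrow> 0 < a - u \<longrightarrow> a + u < 1 \<longrightarrow>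
     2 * real_of_ereal (W a) + C1 * u\<^sup>2 \<le> real_of_ereal (W (a - u)) + real_of_ereal (W (a + u))"
proof -
  obtain W' W'' C1 where D: "\<And>x. x \<notin> \<int> \<Longrightarrow> ((\<lambda>y. real_of_ereal (W y)) has_real_derivative W' x) (at x)"
    "\<And>x. x \<notin> \<int> \<Longrightarrow> (W' has_real_derivative W'' x) (at x)"
    and C: "C1 > 0" "\<And>x. x \<notin> \<int> \<Longrightarrow> W'' x \<ge> C1"
    using W_deriv[OF assms] by blast
  define \<psi> where "\<psi> x = real_of_ereal (W x) - C1 / 2 * x\<^sup>2" for x
  have cv: "convex_on {0<..<1} \<psi>"
  proof (rule f''_ge0_imp_convex[where f' = "\<lambda>x. W' x - C1 * x" and f'' = "\<lambda>x. W'' x - C1"])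
    show "convex {0<..<(1::real)}" by simp
    fix x :: real assume "x \<in> {0<..<1}"
    then have x: "x \<notin> \<int>" using Ints_01 by auto
    show "(\<psi> has_real_derivative W' x - C1 * x) (at x)"
      unfolding \<psi>_def[abs_def] by (rule derivative_eq_intros D(1)[OF x] refl | simp)+
    show "((\<lambda>x. W' x - C1 * x) has_real_derivative W'' x - C1) (at x)"
      by (rule derivative_eq_intros D(2)[OF x] refl | simp)+
    show "0 \<le> W'' x - C1" using C(2)[OF x] by simp
  qed
  show ?thesis
  proof (intro exI[of _ C1] conjI allI impI)
    show "C1 > 0" by (rule C)
    fix a u :: real assume a: "0 \<le> u" "0 < a - u" "a + u < 1"
    have "\<psi> ((1 - 1/2) *\<^sub>R (a - u) + (1/2) *\<^sub>R (a + u)) \<le> (1 - 1/2) * \<psi> (a - u) + (1/2) * \<psi> (a + u)"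
      by (rule convex_onD[OF cv]) (use a in auto)
    moreover have "(1 - 1/2) *\<^sub>R (a - u) + (1/2) *\<^sub>R (a + u) = a" by (simp add: field_simps)
    ultimately have "\<psi> a \<le> (\<psi> (a - u) + \<psi> (a + u)) / 2" by simp
    then show "2 * real_of_ereal (W a) + C1 * u\<^sup>2 \<le> real_of_ereal (W (a - u)) + real_of_ereal (W (a + u))"
      unfolding \<psi>_def by (simp add: power2_eq_square algebra_simps)
  qed
qed

definition Wp :: "(real \<Rightarrow> ereal) \<Rightarrow> real \<Rightarrow> real \<Rightarrow> ennreal" where
  "Wp W B x = e2ennreal (W x + ereal B)"

lemma W_cont_on: assumes "W_hyps W" shows "continuous_on UNIV W"
  using W_isCont[OF assms] by (simp add: continuous_at_imp_continuous_on)

lemma W_meas: assumes "W_hyps W" shows "W \<in> borel_measurable borel"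
  by (rule borel_measurable_continuous_onI[OF W_cont_on[OF assms]])

lemma Wp_tendsto: assumes "W_hyps W" shows "(Wp W B \<longlongrightarrow> Wp W B x) (at x)"
proof -
  have "(W \<longlongrightarrow> W x) (at x)" using W_isCont[OF assms] by (simp add: isCont_def)
  then have "((\<lambda>y. W y + ereal B) \<longlongrightarrow> W x + ereal B) (at x)"
    by (intro tendsto_add_ereal_general) auto
  then show ?thesis unfolding Wp_def by (rule tendsto_e2ennrealI)
qed

lemma Wp_cont_on: assumes "W_hyps W" shows "continuous_on UNIV (Wp W B)"
  using Wp_tendsto[OF assms] by (simp add: continuous_at_imp_continuous_on isCont_def)

lemma Wp_meas[measurable]: assumes "W_hyps W" shows "Wp W B \<in> borel_measurable borel"
  by (rule borel_measurable_continuous_onI[OF Wp_cont_on[OF assms]])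

lemma Wp_per: assumes "W_hyps W" "x - x' \<in> \<int>" shows "Wp W B x = Wp W B x'"
  unfolding Wp_def using W_per_Ints[OF assms] by simp

lemma Wp_fin: assumes "W_hyps W" "x \<notin> \<int>" "\<forall>x. - ereal B \<le> W x"
  shows "Wp W B x = ennreal (real_of_ereal (W x) + B)"
proof -
  have "W x + ereal B = ereal (real_of_ereal (W x) + B)"
    using W_fin[OF assms(1,2)] by (metis plus_ereal.simps(1))
  then show ?thesis unfolding Wp_def by simp
qed

lemma Wp_pointwise:
  assumes "- ereal B \<le> w" "0 \<le> B"
  shows "e2ennreal (w + ereal B) + e2ennreal (- w) = e2ennreal w + ennreal B"
proof (cases w)
  case (real r)
  then have r: "- B \<le> r" using assms by simp
  show ?thesis
  proof (cases "0 \<le> r")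
    case True
    have "ennreal (r + B) = ennreal r + ennreal B" using True assms(2) by (rule ennreal_plus)
    moreover have "ennreal (- r) = 0" using True by (simp add: ennreal_eq_0_iff)
    ultimately show ?thesis using real by simp
  next
    case False
    have "ennreal (r + B) + ennreal (- r) = ennreal (r + B + - r)"
      using r False by (subst ennreal_plus) auto
    then have "ennreal (r + B) + ennreal (- r) = ennreal B" by simp
    moreover have "ennreal r = 0" using False by (intro ennreal_neg) simp
    ultimately show ?thesis using real by simp
  qed
next
  case PInf
  then show ?thesis by simp
next
  case MInf
  then show ?thesis using assms by simp
qed

lemma conv_eq:
  assumes W: "W_hyps W" and B: "0 \<le> B" "\<forall>x. - ereal B \<le> W x"
    and P: "prob_space \<rho>" "sets \<rho> = sets borel"
  shows "conv W \<rho> z = enn2ereal (\<integral>\<^sup>+ y. Wp W B (z - y) \<partial>\<rho>) - ereal B"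
proof -
  interpret prob_space \<rho> by (rule P)
  have mW[measurable]: "W \<in> borel_measurable borel" by (rule W_meas[OF W])
  have m1: "(\<lambda>y. f (z - y)) \<in> borel_measurable \<rho>" if [measurable]: "f \<in> borel_measurable borel" for f :: "real \<Rightarrow> ennreal"
    by (subst measurable_cong_sets[OF P(2) refl]) measurable
  define X where "X = (\<integral>\<^sup>+ y. Wp W B (z - y) \<partial>\<rho>)"
  define Pp where "Pp = (\<integral>\<^sup>+ y. e2ennreal (W (z - y)) \<partial>\<rho>)"
  define N where "N = (\<integral>\<^sup>+ y. e2ennreal (- W (z - y)) \<partial>\<rho>)"
  have mX: "(\<lambda>y. Wp W B (z - y)) \<in> borel_measurable \<rho>" by (rule m1) (rule Wp_meas[OF W])
  have mP: "(\<lambda>y. e2ennreal (W (z - y))) \<in> borel_measurable \<rho>" by (rule m1) measurable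
  have mN: "(\<lambda>y. e2ennreal (- W (z - y))) \<in> borel_measurable \<rho>" by (rule m1) measurable
  have "X + N = (\<integral>\<^sup>+ y. Wp W B (z - y) + e2ennreal (- W (z - y)) \<partial>\<rho>)"
    unfolding X_def N_def by (rule nn_integral_add[symmetric]) (use mX mN in auto)
  also have "\<dots> = (\<integral>\<^sup>+ y. e2ennreal (W (z - y)) + ennreal B \<partial>\<rho>)"
    unfolding Wp_def using Wp_pointwise B by simp
  also have "\<dots> = Pp + ennreal B"
    unfolding Pp_def by (subst nn_integral_add) (use mP in \<open>auto simp: emeasure_space_1\<close>)
  finally have eq: "X + N = Pp + ennreal B" .
  have "N \<le> (\<integral>\<^sup>+ y. ennreal B \<partial>\<rho>)"
    unfolding N_def
  proof (rule nn_integral_mono)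
    fix y
    have "- W (z - y) \<le> ereal B" using B(2) by (metis ereal_minus_le_minus ereal_uminus_uminus)
    then show "e2ennreal (- W (z - y)) \<le> ennreal B" using e2ennreal_mono by fastforce
  qed
  then have NB: "N \<le> ennreal B" by (simp add: emeasure_space_1)
  then have "N \<noteq> top" by (auto simp: top_unique)
  then obtain nr where nr: "N = ennreal nr" "0 \<le> nr" using ennreal_cases[of N] by auto
  show ?thesis
  proof (cases "Pp = top")
    case True
    then have "X + N = top" using eq by simp
    then have "X = top" using nr by simp
    then show ?thesis using True unfolding conv_def Pp_def[symmetric] N_def[symmetric] X_def[symmetric]
      using nr by simp
  next
    case False
    then obtain pr where pr: "Pp = ennreal pr" "0 \<le> pr" by (metis ennreal_cases)
    have ne: "Pp + ennreal B \<noteq> top" using pr by simp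
    have "X \<noteq> top"
    proof
      assume "X = top"
      then have "X + N = top" by simp
      then show False using ne eq by simp
    qed
    then obtain xr where xr: "X = ennreal xr" "0 \<le> xr" by (metis ennreal_cases)
    have "xr + nr = pr + B" using eq xr nr pr B(1)
      by (simp add: ennreal_plus[symmetric] del: ennreal_plus)
    then show ?thesis unfolding conv_def Pp_def[symmetric] N_def[symmetric] X_def[symmetric]
      using xr nr pr by simp
  qed
qed

lemma ess_inf_ge:
  assumes "AE z in lborel. z \<in> {0..<1} \<longrightarrow> c \<le> f z"
  shows "c \<le> ess_inf_T f"
  unfolding ess_inf_T_def by (rule Sup_upper) (use assms in simp)

lemma ess_inf_AE:
  assumes "ess_inf_T f = ereal m"
  shows "AE z in lborel. z \<in> {0..<1} \<longrightarrow> ereal m \<le> f z"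
proof -
  have "AE z in lborel. z \<in> {0..<1} \<longrightarrow> ereal (m - inverse (real (Suc n))) \<le> f z" for n
  proof -
    have "ereal (m - inverse (real (Suc n))) < ess_inf_T f" using assms by simp
    then obtain c where c: "AE z in lborel. z \<in> {0..<1} \<longrightarrow> c \<le> f z"
      and lt: "ereal (m - inverse (real (Suc n))) < c"
      unfolding ess_inf_T_def less_Sup_iff by auto
    show ?thesis using c by eventually_elim (use lt in auto)
  qed
  then have "AE z in lborel. \<forall>n. z \<in> {0..<1} \<longrightarrow> ereal (m - inverse (real (Suc n))) \<le> f z"
    by (intro AE_all_countable[THEN iffD2] allI)
  then show ?thesis
  proof eventually_elim
    case (elim z)
    show ?case
    proof
      assume z: "z \<in> {0..<1}"
      show "ereal m \<le> f z"
      proof (rule ccontr)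
        assume "\<not> ereal m \<le> f z"
        then have lt: "f z < ereal m" by simp
        then obtain v where v: "f z = ereal v" "v < m"
          using elim z by (cases "f z") force+
        obtain n0 :: nat where n0: "n0 > 0" "inverse (real n0) < m - v"
          using ex_inverse_of_nat_less[of "m - v"] v(2) by auto
        have "inverse (real (Suc n0)) \<le> inverse (real n0)"
          by (rule le_imp_inverse_le) (use n0 in auto)
        then have n: "inverse (real (Suc n0)) < m - v" using n0 by linarith
        have "ereal (m - inverse (real (Suc n0))) \<le> f z" using elim z by blast
        then show False using v n by simp
      qed
    qed
  qed
qed

lemma g_meas:
  assumes W: "W_hyps W" and P: "sets \<rho> = sets borel"
  shows "(\<lambda>y. Wp W B (x - y)) \<in> borel_measurable \<rho>"
proof -
  have [measurable]: "Wp W B \<in> borel_measurable borel" by (rule Wp_meas[OF W])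
  show ?thesis by (subst measurable_cong_sets[OF P refl]) measurable
qed

lemma g_per:
  assumes W: "W_hyps W" and "x - x' \<in> \<int>"
  shows "(\<integral>\<^sup>+ y. Wp W B (x - y) \<partial>\<rho>) = (\<integral>\<^sup>+ y. Wp W B (x' - y) \<partial>\<rho>)"
proof -
  have "Wp W B (x - y) = Wp W B (x' - y)" for y
    by (rule Wp_per[OF W]) (use assms(2) in \<open>simp add: algebra_simps\<close>)
  then show ?thesis by simp
qed

lemma g_lsc:
  assumes W: "W_hyps W" and P: "sets \<rho> = sets borel"
    and c: "c < (\<integral>\<^sup>+ y. Wp W B (x - y) \<partial>\<rho>)"
  shows "\<exists>r>0. \<forall>x'. \<bar>x' - x\<bar> < r \<longrightarrow> c < (\<integral>\<^sup>+ y. Wp W B (x' - y) \<partial>\<rho>)"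
proof (rule ccontr)
  assume neg: "\<not> ?thesis"
  have "\<And>n. \<exists>x'. \<bar>x' - x\<bar> < inverse (real (Suc n)) \<and> (\<integral>\<^sup>+ y. Wp W B (x' - y) \<partial>\<rho>) \<le> c"
  proof -
    fix n :: nat
    have all: "\<forall>r>0. \<exists>x'. \<bar>x' - x\<bar> < r \<and> (\<integral>\<^sup>+ y. Wp W B (x' - y) \<partial>\<rho>) \<le> c"
      using neg by (metis not_less)
    have "inverse (real (Suc n)) > 0" by simp
    then show "\<exists>x'. \<bar>x' - x\<bar> < inverse (real (Suc n)) \<and> (\<integral>\<^sup>+ y. Wp W B (x' - y) \<partial>\<rho>) \<le> c"
      using all by blast
  qed
  then obtain xs where xs: "\<And>n. \<bar>xs n - x\<bar> < inverse (real (Suc n))"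
    "\<And>n. (\<integral>\<^sup>+ y. Wp W B (xs n - y) \<partial>\<rho>) \<le> c"
    by metis
  have lim: "xs \<longlonglongrightarrow> x"
  proof (rule LIMSEQ_I)
    fix e :: real assume "0 < e"
    then obtain n0 :: nat where n0: "n0 > 0" "inverse (real n0) < e"
      using ex_inverse_of_nat_less[of e] by auto
    show "\<exists>no. \<forall>n\<ge>no. norm (xs n - x) < e"
    proof (intro exI allI impI)
      fix n assume "n \<ge> n0"
      then have i: "inverse (real (Suc n)) \<le> inverse (real n0)"
        by (intro le_imp_inverse_le) (use n0 in auto)
      show "norm (xs n - x) < e" unfolding real_norm_def using xs(1)[of n] n0(2) i by linarith
    qed
  qed
  have pt: "liminf (\<lambda>n. Wp W B (xs n - y)) = Wp W B (x - y)" for y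
  proof (rule lim_imp_Liminf)
    show "\<not> trivial_limit sequentially" by simp
    have "isCont (Wp W B) (x - y)" using Wp_tendsto[OF W] by (simp add: isCont_def)
    then show "(\<lambda>n. Wp W B (xs n - y)) \<longlonglongrightarrow> Wp W B (x - y)"
      by (rule isCont_tendsto_compose) (intro tendsto_intros lim)
  qed
  have "(\<integral>\<^sup>+ y. Wp W B (x - y) \<partial>\<rho>) = (\<integral>\<^sup>+ y. liminf (\<lambda>n. Wp W B (xs n - y)) \<partial>\<rho>)"
    using pt by simp
  also have "\<dots> \<le> liminf (\<lambda>n. \<integral>\<^sup>+ y. Wp W B (xs n - y) \<partial>\<rho>)"
    by (rule nn_integral_liminf) (rule g_meas[OF W P])
  also have "\<dots> \<le> c"
    by (rule Liminf_le) (use xs(2) in auto)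
  finally show False using c by simp
qed

definition U01 :: "real measure" where "U01 = uniform_measure lborel {0..1}"

lemma U01_prob: "prob_space U01"
  unfolding U01_def by (rule prob_space_uniform_measure) auto

lemma sets_U01[measurable_cong]: "sets U01 = sets borel"
  unfolding U01_def by simp

lemma U01_step:
  fixes a b c :: ennreal and t :: real
  assumes t: "0 < t" "t < 1"
  shows "(\<integral>\<^sup>+ s. (if s < t/2 then a else if s < t then b else c) \<partial>U01)
     = ennreal (t/2) * a + ennreal (t/2) * b + ennreal (1 - t) * c"
proof -
  have m: "(\<lambda>s::real. if s < t/2 then a else if s < t then b else c) \<in> borel_measurable lborel"
    by measurable
  have "(\<integral>\<^sup>+ s. (if s < t/2 then a else if s < t then b else c) \<partial>U01)
      = (\<integral>\<^sup>+ s. (if s < t/2 then a else if s < t then b else c) * indicator {0..1} s \<partial>lborel) / emeasure lborel {0..1::real}"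
    unfolding U01_def by (rule nn_integral_uniform_measure[OF m]) simp
  also have "\<dots> = (\<integral>\<^sup>+ s. (if s < t/2 then a else if s < t then b else c) * indicator {0..1} s \<partial>lborel)"
    by (simp add: divide_ennreal_def)
  also have "\<dots> = (\<integral>\<^sup>+ s. (a * indicator {0..<t/2} s + b * indicator {t/2..<t} s) + c * indicator {t..1} s \<partial>lborel)"
    by (rule nn_integral_cong) (use t in \<open>auto simp: indicator_def\<close>)
  also have "\<dots> = (\<integral>\<^sup>+ s. a * indicator {0..<t/2} s + b * indicator {t/2..<t} s \<partial>lborel) + (\<integral>\<^sup>+ s. c * indicator {t..1} s \<partial>lborel)"
    by (rule nn_integral_add) auto
  also have "(\<integral>\<^sup>+ s. a * indicator {0..<t/2} s + b * indicator {t/2..<t} s \<partial>lborel) = (\<integral>\<^sup>+ s. a * indicator {0..<t/2} s \<partial>lborel) + (\<integral>\<^sup>+ s. b * indicator {t/2..<t} s \<partial>lborel)"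
    by (rule nn_integral_add) auto
  also have "(\<integral>\<^sup>+ s. a * indicator {0..<t/2} s \<partial>lborel) = a * ennreal (t/2)"
    using t by (subst nn_integral_cmult_indicator) auto
  also have "(\<integral>\<^sup>+ s. b * indicator {t/2..<t} s \<partial>lborel) = b * ennreal (t/2)"
    using t by (subst nn_integral_cmult_indicator) auto
  also have "(\<integral>\<^sup>+ s. c * indicator {t..1} s \<partial>lborel) = c * ennreal (1 - t)"
    using t by (subst nn_integral_cmult_indicator) auto
  finally show ?thesis by (simp add: mult.commute)
qed

lemma frac_meas[measurable]: "frac \<in> borel_measurable (borel :: real measure)"
proof -
  have "(\<lambda>x::real. x - real_of_int \<lfloor>x\<rfloor>) \<in> borel_measurable borel"
    using borel_measurable_real_floor by measurable
  then show ?thesis by (simp add: frac_def[abs_def])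
qed

definition Uset :: "real \<Rightarrow> real \<Rightarrow> real set" where
  "Uset x0 \<epsilon> = (\<Union>k::int. ball (x0 + of_int k) \<epsilon>)"

lemma Uset_borel[measurable]: "Uset x0 \<epsilon> \<in> sets borel"
  unfolding Uset_def by (rule borel_open) auto

definition Phi :: "real \<Rightarrow> real \<Rightarrow> real \<Rightarrow> real \<times> real \<Rightarrow> real" where
  "Phi x0 \<epsilon> t p = frac (fst p + (if fst p \<in> Uset x0 \<epsilon> then (if snd p < t/2 then \<epsilon> else if snd p < t then -\<epsilon> else 0) else 0))"

lemma Phi_meas_borel: "Phi x0 \<epsilon> t \<in> borel_measurable (borel \<Otimes>\<^sub>M borel)"
proof -
  have [measurable]: "(\<lambda>p::real\<times>real. indicator (Uset x0 \<epsilon>) (fst p) :: real) \<in> borel_measurable (borel \<Otimes>\<^sub>M borel)"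
    by measurable
  have [measurable]: "(\<lambda>p::real\<times>real. if snd p < t/2 then \<epsilon> else if snd p < t then -\<epsilon> else (0::real)) \<in> borel_measurable (borel \<Otimes>\<^sub>M borel)"
    by measurable
  have [measurable]: "(\<lambda>p::real\<times>real. fst p) \<in> borel_measurable (borel \<Otimes>\<^sub>M borel)"
    by measurable
  have m: "(\<lambda>p::real\<times>real. fst p + indicator (Uset x0 \<epsilon>) (fst p) * (if snd p < t/2 then \<epsilon> else if snd p < t then -\<epsilon> else (0::real))) \<in> borel_measurable (borel \<Otimes>\<^sub>M borel)"
    by (intro borel_measurable_add borel_measurable_times) measurable
  have eq: "Phi x0 \<epsilon> t = frac \<circ> (\<lambda>p::real\<times>real. fst p + indicator (Uset x0 \<epsilon>) (fst p) * (if snd p < t/2 then \<epsilon> else if snd p < t then -\<epsilon> else (0::real)))"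
    by (auto simp: fun_eq_iff Phi_def indicator_def)
  show ?thesis unfolding eq by (rule measurable_comp[OF m frac_meas])
qed

lemma Phi_meas:
  assumes "sets M = sets borel"
  shows "Phi x0 \<epsilon> t \<in> borel_measurable (M \<Otimes>\<^sub>M U01)"
proof -
  have S: "sets (M \<Otimes>\<^sub>M U01) = sets (borel \<Otimes>\<^sub>M borel)"
    by (rule sets_pair_measure_cong[OF assms sets_U01])
  show ?thesis by (subst measurable_cong_sets[OF S refl]) (rule Phi_meas_borel)
qed

definition sig :: "real measure \<Rightarrow> real \<Rightarrow> real \<Rightarrow> real \<Rightarrow> real measure" where
  "sig \<rho> x0 \<epsilon> t = distr (\<rho> \<Otimes>\<^sub>M U01) borel (Phi x0 \<epsilon> t)"

lemma sig_torus:
  assumes "torus_prob \<rho>"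
  shows "torus_prob (sig \<rho> x0 \<epsilon> t)"
proof -
  have P: "prob_space \<rho>" "sets \<rho> = sets borel" using assms unfolding torus_prob_def by auto
  interpret \<rho>: prob_space \<rho> by (rule P)
  interpret U: prob_space U01 by (rule U01_prob)
  interpret pr: prob_space "\<rho> \<Otimes>\<^sub>M U01" by (rule prob_space_pair) unfold_locales
  have m: "Phi x0 \<epsilon> t \<in> measurable (\<rho> \<Otimes>\<^sub>M U01) borel" by (rule Phi_meas[OF P(2)])
  have "prob_space (sig \<rho> x0 \<epsilon> t)" unfolding sig_def by (rule pr.prob_space_distr[OF m])
  moreover have "sets (sig \<rho> x0 \<epsilon> t) = sets borel" unfolding sig_def by simp
  moreover have "emeasure (sig \<rho> x0 \<epsilon> t) {0..<1} = 1"
  proof -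
    have "Phi x0 \<epsilon> t -` {0..<1} \<inter> space (\<rho> \<Otimes>\<^sub>M U01) = space (\<rho> \<Otimes>\<^sub>M U01)"
      unfolding Phi_def by (auto simp: frac_lt_1)
    then show ?thesis unfolding sig_def using m
      by (subst emeasure_distr) (auto simp: pr.emeasure_space_1)
  qed
  ultimately show ?thesis unfolding torus_prob_def by blast
qed

lemma sig_integral:
  assumes "torus_prob \<rho>" and t: "0 < t" "t < 1" and h[measurable]: "h \<in> borel_measurable borel"
  shows "(\<integral>\<^sup>+ x. h x \<partial>sig \<rho> x0 \<epsilon> t) = (\<integral>\<^sup>+ y.
     ennreal (t/2) * h (frac (y + (if y \<in> Uset x0 \<epsilon> then \<epsilon> else 0)))
     + ennreal (t/2) * h (frac (y + (if y \<in> Uset x0 \<epsilon> then - \<epsilon> else 0)))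
     + ennreal (1 - t) * h (frac y) \<partial>\<rho>)"
proof -
  have P: "prob_space \<rho>" "sets \<rho> = sets borel" using assms unfolding torus_prob_def by auto
  interpret U: prob_space U01 by (rule U01_prob)
  have m: "Phi x0 \<epsilon> t \<in> measurable (\<rho> \<Otimes>\<^sub>M U01) borel" by (rule Phi_meas[OF P(2)])
  have "(\<integral>\<^sup>+ x. h x \<partial>sig \<rho> x0 \<epsilon> t) = (\<integral>\<^sup>+ p. h (Phi x0 \<epsilon> t p) \<partial>(\<rho> \<Otimes>\<^sub>M U01))"
    unfolding sig_def by (rule nn_integral_distr[OF m]) simp
  also have "\<dots> = (\<integral>\<^sup>+ y. \<integral>\<^sup>+ s. h (Phi x0 \<epsilon> t (y, s)) \<partial>U01 \<partial>\<rho>)"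
    by (rule U.nn_integral_fst[symmetric]) (use m in measurable)
  also have "\<dots> = (\<integral>\<^sup>+ y.
     ennreal (t/2) * h (frac (y + (if y \<in> Uset x0 \<epsilon> then \<epsilon> else 0)))
     + ennreal (t/2) * h (frac (y + (if y \<in> Uset x0 \<epsilon> then - \<epsilon> else 0)))
     + ennreal (1 - t) * h (frac y) \<partial>\<rho>)"
  proof (rule nn_integral_cong)
    fix y
    have "(\<lambda>s. h (Phi x0 \<epsilon> t (y, s))) = (\<lambda>s. if s < t/2 then h (frac (y + (if y \<in> Uset x0 \<epsilon> then \<epsilon> else 0)))
        else if s < t then h (frac (y + (if y \<in> Uset x0 \<epsilon> then - \<epsilon> else 0))) else h (frac y))"
      unfolding Phi_def by (auto simp: fun_eq_iff)
    then show "(\<integral>\<^sup>+ s. h (Phi x0 \<epsilon> t (y, s)) \<partial>U01) = ennreal (t/2) * h (frac (y + (if y \<in> Uset x0 \<epsilon> then \<epsilon> else 0)))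
     + ennreal (t/2) * h (frac (y + (if y \<in> Uset x0 \<epsilon> then - \<epsilon> else 0)))
     + ennreal (1 - t) * h (frac y)"
      using U01_step[OF t] by simp
  qed
  finally show ?thesis .
qed

lemma lborel_shift:
  fixes f :: "real \<Rightarrow> ennreal"
  assumes [measurable]: "f \<in> borel_measurable borel"
  shows "(\<integral>\<^sup>+ z. f z \<partial>lborel) = (\<integral>\<^sup>+ z. f (c + z) \<partial>lborel)"
  using nn_integral_real_affine[of f 1 c] by simp

lemma per_unit:
  fixes h :: "real \<Rightarrow> ennreal"
  assumes [measurable]: "h \<in> borel_measurable borel" and per: "\<And>x k. h (x + of_int k) = h x"
  shows "(\<integral>\<^sup>+ z. h z * indicator {a..<a+1} z \<partial>lborel) = (\<integral>\<^sup>+ z. h z * indicator {0..<1} z \<partial>lborel)"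
proof -
  define n where "n = floor a"
  define b where "b = a - of_int n"
  have b: "0 \<le> b" "b < 1" unfolding b_def n_def by linarith+
  have "(\<integral>\<^sup>+ z. h z * indicator {a..<a+1} z \<partial>lborel) = (\<integral>\<^sup>+ z. h (of_int n + z) * indicator {a..<a+1} (of_int n + z) \<partial>lborel)"
    by (rule lborel_shift) measurable
  also have "\<dots> = (\<integral>\<^sup>+ z. h z * indicator {b..<b+1} z \<partial>lborel)"
  proof (rule nn_integral_cong)
    fix z
    have "h (of_int n + z) = h z" using per[of z n] by (simp add: add.commute)
    moreover have "indicator {a..<a+1} (of_int n + z) = (indicator {b..<b+1} z :: ennreal)"
      unfolding b_def by (auto simp: indicator_def)
    ultimately show "h (of_int n + z) * indicator {a..<a+1} (of_int n + z) = h z * indicator {b..<b+1} z" by simp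
  qed
  also have "\<dots> = (\<integral>\<^sup>+ z. h z * indicator {b..<1} z + h z * indicator {1..<b+1} z \<partial>lborel)"
    by (rule nn_integral_cong) (use b in \<open>auto simp: indicator_def\<close>)
  also have "\<dots> = (\<integral>\<^sup>+ z. h z * indicator {b..<1} z \<partial>lborel) + (\<integral>\<^sup>+ z. h z * indicator {1..<b+1} z \<partial>lborel)"
    by (rule nn_integral_add) auto
  also have "(\<integral>\<^sup>+ z. h z * indicator {1..<b+1} z \<partial>lborel) = (\<integral>\<^sup>+ z. h (1 + z) * indicator {1..<b+1} (1 + z) \<partial>lborel)"
    by (rule lborel_shift) measurable
  also have "\<dots> = (\<integral>\<^sup>+ z. h z * indicator {0..<b} z \<partial>lborel)"
  proof (rule nn_integral_cong)
    fix z
    have "h (1 + z) = h z" using per[of z 1] by (simp add: add.commute)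
    moreover have "indicator {1..<b+1} (1 + z) = (indicator {0..<b} z :: ennreal)"
      by (auto simp: indicator_def)
    ultimately show "h (1 + z) * indicator {1..<b+1} (1 + z) = h z * indicator {0..<b} z" by simp
  qed
  also have "(\<integral>\<^sup>+ z. h z * indicator {b..<1} z \<partial>lborel) + (\<integral>\<^sup>+ z. h z * indicator {0..<b} z \<partial>lborel)
      = (\<integral>\<^sup>+ z. h z * indicator {b..<1} z + h z * indicator {0..<b} z \<partial>lborel)"
    by (rule nn_integral_add[symmetric]) auto
  also have "\<dots> = (\<integral>\<^sup>+ z. h z * indicator {0..<1} z \<partial>lborel)"
    by (rule nn_integral_cong) (use b in \<open>auto simp: indicator_def\<close>)
  finally show ?thesis .
qed

lemma rW_ge: assumes "W_hyps W" "\<forall>x. - ereal B \<le> W x" "0 \<le> B"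
  shows "0 \<le> real_of_ereal (W z) + B"
proof (cases "z \<in> \<int>")
  case True
  then show ?thesis using W_Ints[OF assms(1) True] assms(3) by simp
next
  case False
  have "- ereal B \<le> W z" using assms(2) by simp
  moreover obtain r where r: "W z = ereal r" using W_fin[OF assms(1) False] by blast
  ultimately have "- B \<le> r" by simp
  then show ?thesis using r by simp
qed

lemma Wp_int01:
  assumes W: "W_hyps W" and B: "0 \<le> B" "\<forall>x. - ereal B \<le> W x"
  shows "(\<integral>\<^sup>+ z. Wp W B z * indicator {0..<1} z \<partial>lborel) = ennreal B"
proof -
  define rW where "rW z = real_of_ereal (W z)" for z
  have "(\<integral>\<^sup>+ z. Wp W B z * indicator {0..<1} z \<partial>lborel) = (\<integral>\<^sup>+ z. ennreal ((rW z + B) * indicator {0..1} z) \<partial>lborel)"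
  proof (rule nn_integral_cong_AE)
    have "AE z in lborel. z \<noteq> 0" by (rule AE_lborel_singleton)
    moreover have "AE z in lborel. z \<noteq> 1" by (rule AE_lborel_singleton)
    ultimately show "AE z in lborel. Wp W B z * indicator {0..<1} z = ennreal ((rW z + B) * indicator {0..1} z)"
    proof eventually_elim
      case (elim z)
      show ?case
      proof (cases "0 < z \<and> z < 1")
        case True
        then have "z \<notin> \<int>" using Ints_01 by auto
        then show ?thesis using True Wp_fin[OF W _ B(2)] unfolding rW_def by (simp add: indicator_def)
      next
        case False
        then show ?thesis using elim by (auto simp: indicator_def)
      qed
    qed
  qed
  also have "\<dots> = ennreal (\<integral> z. (rW z + B) * indicator {0..1} z \<partial>lborel)"
  proof -
    have eqf: "(\<lambda>z. (rW z + B) * indicator {0..1} z) = (\<lambda>z. indicator {0..1} z *\<^sub>R rW z + B * indicator {0..1} z)"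
      by (auto simp: fun_eq_iff indicator_def)
    have i1: "integrable lborel (\<lambda>z. indicator {0..1} z *\<^sub>R rW z)"
      using W_int[OF W] by (simp add: set_integrable_def rW_def)
    have i2: "integrable lborel (\<lambda>z. B * indicator {0..1::real} z)"
      by (intro integrable_mult_right integrable_real_indicator) auto
    have int: "integrable lborel (\<lambda>z. (rW z + B) * indicator {0..1} z)"
      unfolding eqf by (rule Bochner_Integration.integrable_add[OF i1 i2])
    show ?thesis
      by (rule nn_integral_eq_integral[OF int]) (use rW_ge[OF W B(2) B(1)] in \<open>auto simp: rW_def indicator_def\<close>)
  qed
  also have "(\<integral> z. (rW z + B) * indicator {0..1} z \<partial>lborel) = B"
  proof -
    have eqf: "(\<lambda>z. (rW z + B) * indicator {0..1} z) = (\<lambda>z. indicator {0..1} z *\<^sub>R rW z + B * indicator {0..1} z)"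
      by (auto simp: fun_eq_iff indicator_def)
    have i1: "integrable lborel (\<lambda>z. indicator {0..1} z *\<^sub>R rW z)"
      using W_int[OF W] by (simp add: set_integrable_def rW_def)
    have i2: "integrable lborel (\<lambda>z. B * indicator {0..1::real} z)"
      by (intro integrable_mult_right integrable_real_indicator) auto
    have "(\<integral> z. indicator {0..1} z *\<^sub>R rW z \<partial>lborel) = 0"
      using W_int0[OF W] by (simp add: set_lebesgue_integral_def rW_def)
    then show ?thesis unfolding eqf by (subst Bochner_Integration.integral_add[OF i1 i2]) simp
  qed
  finally show ?thesis .
qed

lemma ereal_enn_le1:
  assumes "ereal c \<le> enn2ereal G - ereal B" "0 \<le> c + B"
  shows "ennreal (c + B) \<le> G"
proof (cases "G = top")
  case True then show ?thesis by simp
next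
  case False
  then obtain gr where g: "G = ennreal gr" "0 \<le> gr" using ennreal_cases[of G] by auto
  then have "c \<le> gr - B" using assms(1) by simp
  then show ?thesis using g by (simp add: ennreal_leI)
qed

lemma ereal_enn_le2:
  assumes "ennreal (c + B) \<le> G" "0 \<le> c + B"
  shows "ereal c \<le> enn2ereal G - ereal B"
proof (cases "G = top")
  case True then show ?thesis by simp
next
  case False
  then obtain gr where g: "G = ennreal gr" "0 \<le> gr" using ennreal_cases[of G] by auto
  then have "c + B \<le> gr" using assms(1) ennreal_le_iff[of gr "c + B"] by simp
  then show ?thesis using g by simp
qed

lemma g_int01:
  assumes W: "W_hyps W" and B: "0 \<le> B" "\<forall>x. - ereal B \<le> W x" and T: "torus_prob \<rho>"
  shows "(\<integral>\<^sup>+ z. (\<integral>\<^sup>+ y. Wp W B (z - y) \<partial>\<rho>) * indicator {0..<1} z \<partial>lborel) = ennreal B"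
proof -
  have P: "prob_space \<rho>" "sets \<rho> = sets borel" using T unfolding torus_prob_def by auto
  interpret \<rho>: prob_space \<rho> by (rule P)
  interpret pair_sigma_finite lborel \<rho> ..
  have [measurable]: "Wp W B \<in> borel_measurable borel" by (rule Wp_meas[OF W])
  have mb: "(\<lambda>(z, y). Wp W B (z - y) * indicator {0..<1} z) \<in> borel_measurable (borel \<Otimes>\<^sub>M borel)"
    by measurable
  have S: "sets (lborel \<Otimes>\<^sub>M \<rho>) = sets (borel \<Otimes>\<^sub>M borel)"
    by (rule sets_pair_measure_cong) (auto simp: P)
  have m: "(\<lambda>(z, y). Wp W B (z - y) * indicator {0..<1} z) \<in> borel_measurable (lborel \<Otimes>\<^sub>M \<rho>)"
    by (subst measurable_cong_sets[OF S refl]) (rule mb)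
  have "(\<integral>\<^sup>+ z. (\<integral>\<^sup>+ y. Wp W B (z - y) \<partial>\<rho>) * indicator {0..<1} z \<partial>lborel)
      = (\<integral>\<^sup>+ z. (\<integral>\<^sup>+ y. Wp W B (z - y) * indicator {0..<1} z \<partial>\<rho>) \<partial>lborel)"
    by (rule nn_integral_cong) (rule nn_integral_multc[symmetric], rule g_meas[OF W P(2)])
  also have "\<dots> = (\<integral>\<^sup>+ y. (\<integral>\<^sup>+ z. Wp W B (z - y) * indicator {0..<1} z \<partial>lborel) \<partial>\<rho>)"
    using Fubini'[OF m] by simp
  also have "\<dots> = (\<integral>\<^sup>+ y. ennreal B \<partial>\<rho>)"
  proof (rule nn_integral_cong)
    fix y :: real
    have "(\<integral>\<^sup>+ v. Wp W B v * indicator {-y..<-y+1} v \<partial>lborel)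
        = (\<integral>\<^sup>+ z. Wp W B (-y + z) * indicator {-y..<-y+1} (-y + z) \<partial>lborel)"
      by (rule lborel_shift) measurable
    also have "\<dots> = (\<integral>\<^sup>+ z. Wp W B (z - y) * indicator {0..<1} z \<partial>lborel)"
      by (rule nn_integral_cong) (auto simp: indicator_def)
    finally have e1: "(\<integral>\<^sup>+ z. Wp W B (z - y) * indicator {0..<1} z \<partial>lborel) = (\<integral>\<^sup>+ v. Wp W B v * indicator {-y..<-y+1} v \<partial>lborel)" ..
    have "(\<integral>\<^sup>+ v. Wp W B v * indicator {-y..<-y+1} v \<partial>lborel) = (\<integral>\<^sup>+ v. Wp W B v * indicator {0..<1} v \<partial>lborel)"
      by (rule per_unit) (auto intro: Wp_per[OF W])
    then show "(\<integral>\<^sup>+ z. Wp W B (z - y) * indicator {0..<1} z \<partial>lborel) = ennreal B"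
      using e1 Wp_int01[OF W B] by simp
  qed
  also have "\<dots> = ennreal B" by (simp add: \<rho>.emeasure_space_1)
  finally show ?thesis .
qed

lemma ess_inf_le0:
  assumes W: "W_hyps W" and B: "0 \<le> B" "\<forall>x. - ereal B \<le> W x" and T: "torus_prob \<rho>"
  shows "ess_inf_T (conv W \<rho>) \<le> 0"
proof (rule ccontr)
  assume "\<not> ess_inf_T (conv W \<rho>) \<le> 0"
  then have "0 < ess_inf_T (conv W \<rho>)" by simp
  then obtain c :: real where c: "0 < c" "ereal c < ess_inf_T (conv W \<rho>)"
    by (metis ereal_dense2 ereal_less(2) less_ereal.simps(1) order.strict_trans)
  then obtain c' where c': "AE z in lborel. z \<in> {0..<1} \<longrightarrow> c' \<le> conv W \<rho> z" and cc: "ereal c < c'"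
    unfolding ess_inf_T_def less_Sup_iff by auto
  have P: "prob_space \<rho>" "sets \<rho> = sets borel" using T unfolding torus_prob_def by auto
  have ae: "AE z in lborel. ennreal (c + B) * indicator {0..<1} z \<le> (\<integral>\<^sup>+ y. Wp W B (z - y) \<partial>\<rho>) * indicator {0..<1} z"
    using c'
  proof eventually_elim
    case (elim z)
    show ?case
    proof (cases "z \<in> {0..<1}")
      case True
      then have "ereal c \<le> conv W \<rho> z" using elim cc by auto
      then have "ereal c \<le> enn2ereal (\<integral>\<^sup>+ y. Wp W B (z - y) \<partial>\<rho>) - ereal B"
        using conv_eq[OF W B P] by simp
      then have "ennreal (c + B) \<le> (\<integral>\<^sup>+ y. Wp W B (z - y) \<partial>\<rho>)"
        by (rule ereal_enn_le1) (use c B in auto)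
      then show ?thesis using True by simp
    qed simp
  qed
  have i: "(\<integral>\<^sup>+ z. ennreal (c + B) * indicator {0..<1} (z::real) \<partial>lborel) = ennreal (c + B) * emeasure lborel {0..<1::real}"
    by (rule nn_integral_cmult_indicator) simp
  have "ennreal (c + B) = (\<integral>\<^sup>+ z. ennreal (c + B) * indicator {0..<1} (z::real) \<partial>lborel)"
    unfolding i by simp
  also have "\<dots> \<le> (\<integral>\<^sup>+ z. (\<integral>\<^sup>+ y. Wp W B (z - y) \<partial>\<rho>) * indicator {0..<1} z \<partial>lborel)"
    by (rule nn_integral_mono_AE[OF ae])
  also have "\<dots> = ennreal B" by (rule g_int01[OF W B T])
  finally have "ennreal (c + B) \<le> ennreal B" .
  then show False using c B ennreal_le_iff[of B "c + B"] by simp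
qed

definition Aset :: "real \<Rightarrow> real set" where
  "Aset M = {p. \<exists>k::int. \<bar>p - of_int k\<bar> \<le> M}"

lemma Aset_shift: "p + of_int j \<in> Aset M \<longleftrightarrow> p \<in> Aset M"
proof
  assume "p + of_int j \<in> Aset M"
  then obtain k :: int where "\<bar>p + of_int j - of_int k\<bar> \<le> M" unfolding Aset_def by auto
  then have "\<bar>p - of_int (k - j)\<bar> \<le> M" by (simp add: algebra_simps)
  then show "p \<in> Aset M" unfolding Aset_def by blast
next
  assume "p \<in> Aset M"
  then obtain k :: int where "\<bar>p - of_int k\<bar> \<le> M" unfolding Aset_def by auto
  then have "\<bar>p + of_int j - of_int (k + j)\<bar> \<le> M" by (simp add: algebra_simps)
  then show "p + of_int j \<in> Aset M" unfolding Aset_def by blast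
qed

lemma frac_Aset: "frac p \<in> Aset M \<longleftrightarrow> p \<in> Aset M"
  using Aset_shift[of p "- floor p" M] by (simp add: frac_def)

lemma frac_id: "0 \<le> p \<Longrightarrow> p < 1 \<Longrightarrow> frac p = p"
  using frac_eq by blast

lemma frac_arc: "frac ` {-M..M} = Aset M \<inter> {0..<1}"
proof
  show "frac ` {-M..M} \<subseteq> Aset M \<inter> {0..<1}"
  proof
    fix p assume "p \<in> frac ` {-M..M}"
    then obtain x where x: "x \<in> {-M..M}" "p = frac x" by auto
    have "\<bar>p - of_int (- floor x)\<bar> \<le> M" using x by (auto simp: frac_def)
    then have "p \<in> Aset M" unfolding Aset_def by blast
    moreover have "p \<in> {0..<1}" using x by (simp add: frac_lt_1)
    ultimately show "p \<in> Aset M \<inter> {0..<1}" by simp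
  qed
  show "Aset M \<inter> {0..<1} \<subseteq> frac ` {-M..M}"
  proof
    fix p assume p: "p \<in> Aset M \<inter> {0..<1}"
    then obtain k :: int where k: "\<bar>p - of_int k\<bar> \<le> M" unfolding Aset_def by auto
    have "frac (p - of_int k) = frac p" by (simp add: frac_def)
    also have "\<dots> = p" using p by (simp add: frac_id)
    finally have "p = frac (p - of_int k)" by simp
    moreover have "p - of_int k \<in> {-M..M}" using k by auto
    ultimately show "p \<in> frac ` {-M..M}" by blast
  qed
qed

lemma Aset_borel[measurable]: "Aset M \<in> sets borel"
proof -
  have "Aset M = (\<Union>k::int. {of_int k - M .. of_int k + M})"
    unfolding Aset_def by (auto simp: abs_le_iff algebra_simps)
  also have "\<dots> \<in> sets borel" by (intro sets.countable_UN) auto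
  finally show ?thesis .
qed

lemma arc_borel[measurable]: "frac ` {-M..M::real} \<in> sets borel"
proof -
  have "Aset M \<inter> {0..<1} \<in> sets borel" by measurable
  then show ?thesis by (simp only: frac_arc)
qed

lemma arc_sep:
  assumes x0: "0 \<le> x0" "x0 < 1" and M: "0 \<le> M" "2 * M \<le> 1"
    and ne: "x0 \<noteq> frac M" "x0 \<noteq> frac (- M)"
  shows "\<exists>\<eta>>0. (\<forall>w. \<bar>w\<bar> < \<eta> \<longrightarrow> x0 + w \<in> Aset M) \<or> (\<forall>w. \<bar>w\<bar> < \<eta> \<longrightarrow> x0 + w \<notin> Aset M)"
proof (cases "x0 \<in> Aset M")
  case True
  then obtain k :: int where k: "\<bar>x0 - of_int k\<bar> \<le> M" unfolding Aset_def by auto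
  have n1: "x0 - of_int k \<noteq> M"
  proof
    assume "x0 - of_int k = M"
    then have "frac M = frac (x0 - of_int k)" by simp
    also have "\<dots> = frac x0" by (simp add: frac_def)
    also have "\<dots> = x0" by (rule frac_id[OF x0])
    finally show False using ne by simp
  qed
  have n2: "x0 - of_int k \<noteq> - M"
  proof
    assume "x0 - of_int k = - M"
    then have "frac (- M) = frac (x0 - of_int k)" by simp
    also have "\<dots> = frac x0" by (simp add: frac_def)
    also have "\<dots> = x0" by (rule frac_id[OF x0])
    finally show False using ne by simp
  qed
  have lt: "\<bar>x0 - of_int k\<bar> < M" using k n1 n2 by (auto simp: abs_if split: if_splits)
  show ?thesis
  proof (intro exI[of _ "M - \<bar>x0 - of_int k\<bar>"] conjI disjI1 allI impI)
    show "0 < M - \<bar>x0 - of_int k\<bar>" using lt by simp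
    fix w :: real assume "\<bar>w\<bar> < M - \<bar>x0 - of_int k\<bar>"
    then have "\<bar>x0 + w - of_int k\<bar> \<le> M" by linarith
    then show "x0 + w \<in> Aset M" unfolding Aset_def by blast
  qed
next
  case False
  then have nk: "\<And>k::int. M < \<bar>x0 - of_int k\<bar>" unfolding Aset_def by (auto simp: not_le)
  have a0: "M < x0" using nk[of 0] x0 by simp
  have a1: "M < 1 - x0" using nk[of 1] x0 by simp
  show ?thesis
  proof (intro exI[of _ "min (x0 - M) (1 - x0 - M)"] conjI disjI2 allI impI)
    show "0 < min (x0 - M) (1 - x0 - M)" using a0 a1 by simp
    fix w :: real assume w: "\<bar>w\<bar> < min (x0 - M) (1 - x0 - M)"
    show "x0 + w \<notin> Aset M"
    proof
      assume "x0 + w \<in> Aset M"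
      then obtain k :: int where k: "\<bar>x0 + w - of_int k\<bar> \<le> M" unfolding Aset_def by auto
      show False
      proof (cases "k \<le> 0")
        case True
        then have "(of_int k::real) \<le> 0" by simp
        then show False using k w by linarith
      next
        case False
        then have "(of_int k::real) \<ge> 1" by simp
        then show False using k w by linarith
      qed
    qed
  qed
qed

lemma inA_shift:
  assumes y: "y \<in> frac ` {-M..M}" and U: "y \<in> Uset x0 \<epsilon>" and d: "\<bar>d\<bar> \<le> \<epsilon>"
    and sep: "(\<forall>w. \<bar>w\<bar> < 2 * \<epsilon> \<longrightarrow> x0 + w \<in> Aset M) \<or> (\<forall>w. \<bar>w\<bar> < 2 * \<epsilon> \<longrightarrow> x0 + w \<notin> Aset M)"
  shows "frac (y + d) \<in> frac ` {-M..M}"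
proof -
  obtain k :: int where k: "dist (x0 + of_int k) y < \<epsilon>" using U unfolding Uset_def by auto
  define v where "v = y - x0 - of_int k"
  have v: "\<bar>v\<bar> < \<epsilon>" using k unfolding v_def dist_real_def by (simp add: abs_minus_commute algebra_simps)
  have "y \<in> Aset M" using y frac_arc by auto
  then have "x0 + v + of_int k \<in> Aset M" unfolding v_def by simp
  then have "x0 + v \<in> Aset M" by (simp only: Aset_shift)
  then have al: "\<forall>w. \<bar>w\<bar> < 2 * \<epsilon> \<longrightarrow> x0 + w \<in> Aset M" using sep v by auto
  have "\<bar>v + d\<bar> < 2 * \<epsilon>" using v d by linarith
  then have "x0 + (v + d) \<in> Aset M" using al by blast
  then have "x0 + (v + d) + of_int k \<in> Aset M" by (simp only: Aset_shift)
  moreover have "x0 + (v + d) + of_int k = y + d" unfolding v_def by simp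
  ultimately have "y + d \<in> Aset M" by simp
  then have "frac (y + d) \<in> Aset M" by (simp only: frac_Aset)
  then show ?thesis using frac_arc by (auto simp: frac_lt_1)
qed

lemma sig_arc_ge:
  assumes T: "torus_prob \<rho>" and t: "0 < t" "t < 1" and e: "0 < \<epsilon>"
    and sep: "(\<forall>w. \<bar>w\<bar> < 2 * \<epsilon> \<longrightarrow> x0 + w \<in> Aset M) \<or> (\<forall>w. \<bar>w\<bar> < 2 * \<epsilon> \<longrightarrow> x0 + w \<notin> Aset M)"
  shows "emeasure \<rho> (frac ` {-M..M}) \<le> emeasure (sig \<rho> x0 \<epsilon> t) (frac ` {-M..M})"
proof -
  define A where "A = frac ` {-M..M}"
  have Ab[measurable]: "A \<in> sets borel" unfolding A_def by simp
  have P: "prob_space \<rho>" "sets \<rho> = sets borel" and one: "emeasure \<rho> {0..<1} = 1"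
    using T unfolding torus_prob_def by auto
  interpret \<rho>: prob_space \<rho> by (rule P(1))
  have sS: "sets (sig \<rho> x0 \<epsilon> t) = sets borel" unfolding sig_def by simp
  have "emeasure (sig \<rho> x0 \<epsilon> t) A = (\<integral>\<^sup>+ x. indicator A x \<partial>sig \<rho> x0 \<epsilon> t)"
    by (rule nn_integral_indicator[symmetric]) (simp add: sS)
  also have "\<dots> = (\<integral>\<^sup>+ y.
     ennreal (t/2) * indicator A (frac (y + (if y \<in> Uset x0 \<epsilon> then \<epsilon> else 0)))
     + ennreal (t/2) * indicator A (frac (y + (if y \<in> Uset x0 \<epsilon> then - \<epsilon> else 0)))
     + ennreal (1 - t) * indicator A (frac y) \<partial>\<rho>)"
    by (rule sig_integral[OF T t]) simp
  finally have eq: "emeasure (sig \<rho> x0 \<epsilon> t) A = \<dots>" .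
  have ae01: "AE y in \<rho>. y \<in> {0..<1}"
    by (rule \<rho>.AE_prob_1) (simp add: measure_def one)
  have "emeasure \<rho> A = (\<integral>\<^sup>+ y. indicator A y \<partial>\<rho>)"
    by (rule nn_integral_indicator[symmetric]) (simp add: P)
  also have "\<dots> \<le> (\<integral>\<^sup>+ y.
     ennreal (t/2) * indicator A (frac (y + (if y \<in> Uset x0 \<epsilon> then \<epsilon> else 0)))
     + ennreal (t/2) * indicator A (frac (y + (if y \<in> Uset x0 \<epsilon> then - \<epsilon> else 0)))
     + ennreal (1 - t) * indicator A (frac y) \<partial>\<rho>)"
  proof (rule nn_integral_mono_AE)
    show "AE y in \<rho>. indicator A y \<le> ennreal (t/2) * indicator A (frac (y + (if y \<in> Uset x0 \<epsilon> then \<epsilon> else 0)))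
     + ennreal (t/2) * indicator A (frac (y + (if y \<in> Uset x0 \<epsilon> then - \<epsilon> else 0)))
     + ennreal (1 - t) * indicator A (frac y)"
      using ae01
    proof eventually_elim
      case (elim y)
      show ?case
      proof (cases "y \<in> A")
        case False
        then show ?thesis by simp
      next
        case True
        have fy: "frac y = y" using elim by (simp add: frac_id)
        have i1: "frac (y + (if y \<in> Uset x0 \<epsilon> then \<epsilon> else 0)) \<in> A"
          using inA_shift[of y M x0 \<epsilon> \<epsilon>] True sep e fy unfolding A_def by (cases "y \<in> Uset x0 \<epsilon>") auto
        have i2: "frac (y + (if y \<in> Uset x0 \<epsilon> then - \<epsilon> else 0)) \<in> A"
          using inA_shift[of y M x0 \<epsilon> "- \<epsilon>"] True sep e fy unfolding A_def by (cases "y \<in> Uset x0 \<epsilon>") auto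
        have a: "ennreal (t/2) + ennreal (t/2) = ennreal (t/2 + t/2)"
          using t by (intro ennreal_plus[symmetric]) auto
        have b: "ennreal (t/2 + t/2) + ennreal (1 - t) = ennreal (t/2 + t/2 + (1 - t))"
          using t by (intro ennreal_plus[symmetric]) auto
        have c: "t/2 + t/2 + (1 - t) = 1" by simp
        have s1: "ennreal (t/2) + ennreal (t/2) + ennreal (1 - t) = 1"
          unfolding a b c by simp
        show ?thesis using i1 i2 True fy s1 by simp
      qed
    qed
  qed
  finally show ?thesis unfolding A_def[symmetric] using eq by simp
qed

lemma enn_comb:
  fixes X0 X1 X2 c t :: real
  assumes "0 \<le> X0" "0 \<le> X1" "0 \<le> X2" "0 < t" "t < 1" "0 \<le> c"
    and "X0 + c \<le> t/2 * X1 + t/2 * X2 + (1 - t) * X0"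
  shows "ennreal X0 + ennreal c \<le> ennreal (t/2) * ennreal X1 + ennreal (t/2) * ennreal X2 + ennreal (1 - t) * ennreal X0"
proof -
  have n1: "0 \<le> t/2 * X1" "0 \<le> t/2 * X2" "0 \<le> (1 - t) * X0" using assms by auto
  have m1: "ennreal (t/2 * X1) = ennreal (t/2) * ennreal X1" by (rule ennreal_mult) (use assms in auto)
  have m2: "ennreal (t/2 * X2) = ennreal (t/2) * ennreal X2" by (rule ennreal_mult) (use assms in auto)
  have m3: "ennreal ((1 - t) * X0) = ennreal (1 - t) * ennreal X0" by (rule ennreal_mult) (use assms in auto)
  have p1: "ennreal (t/2 * X1 + t/2 * X2 + (1 - t) * X0) = ennreal (t/2 * X1 + t/2 * X2) + ennreal ((1 - t) * X0)"
    by (rule ennreal_plus) (use n1 in auto)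
  have p2: "ennreal (t/2 * X1 + t/2 * X2) = ennreal (t/2 * X1) + ennreal (t/2 * X2)"
    by (rule ennreal_plus) (use n1 in auto)
  have "ennreal (t/2 * X1 + t/2 * X2 + (1 - t) * X0) = ennreal (t/2) * ennreal X1 + ennreal (t/2) * ennreal X2 + ennreal (1 - t) * ennreal X0"
    unfolding p1 p2 m1 m2 m3 ..
  moreover have "ennreal (X0 + c) = ennreal X0 + ennreal c" using assms by simp
  moreover have "ennreal (X0 + c) \<le> ennreal (t/2 * X1 + t/2 * X2 + (1 - t) * X0)"
    using assms(7) by (rule ennreal_leI)
  ultimately show ?thesis by simp
qed

lemma enn_comb_id:
  fixes t :: real and h :: ennreal
  assumes "0 < t" "t < 1"
  shows "ennreal (t/2) * h + ennreal (t/2) * h + ennreal (1 - t) * h = h"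
proof -
  have a: "ennreal (t/2) + ennreal (t/2) = ennreal (t/2 + t/2)"
    using assms by (intro ennreal_plus[symmetric]) auto
  have b: "ennreal (t/2 + t/2) + ennreal (1 - t) = ennreal (t/2 + t/2 + (1 - t))"
    using assms by (intro ennreal_plus[symmetric]) auto
  have c: "t/2 + t/2 + (1 - t) = 1" by simp
  have "ennreal (t/2) * h + ennreal (t/2) * h + ennreal (1 - t) * h = (ennreal (t/2) + ennreal (t/2) + ennreal (1 - t)) * h"
    by (simp add: distrib_right)
  also have "\<dots> = h" unfolding a b c by simp
  finally show ?thesis .
qed

lemma Wp_frac: assumes "W_hyps W" shows "Wp W B (z - frac x) = Wp W B (z - x)"
  by (rule Wp_per[OF assms]) (simp add: frac_def)

lemma sig_near:
  assumes W: "W_hyps W" and T: "torus_prob \<rho>" and t: "0 < t" "t < 1"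
  shows "ennreal (1 - t) * (\<integral>\<^sup>+ y. Wp W B (z - y) \<partial>\<rho>) \<le> (\<integral>\<^sup>+ y. Wp W B (z - y) \<partial>sig \<rho> x0 \<epsilon> t)"
proof -
  have P: "sets \<rho> = sets borel" using T unfolding torus_prob_def by auto
  have [measurable]: "Wp W B \<in> borel_measurable borel" by (rule Wp_meas[OF W])
  have "(\<integral>\<^sup>+ y. Wp W B (z - y) \<partial>sig \<rho> x0 \<epsilon> t) = (\<integral>\<^sup>+ y.
     ennreal (t/2) * Wp W B (z - frac (y + (if y \<in> Uset x0 \<epsilon> then \<epsilon> else 0)))
     + ennreal (t/2) * Wp W B (z - frac (y + (if y \<in> Uset x0 \<epsilon> then - \<epsilon> else 0)))
     + ennreal (1 - t) * Wp W B (z - frac y) \<partial>\<rho>)"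
    by (rule sig_integral[OF T t]) measurable
  also have "\<dots> \<ge> (\<integral>\<^sup>+ y. ennreal (1 - t) * Wp W B (z - y) \<partial>\<rho>)"
    by (rule nn_integral_mono) (simp add: Wp_frac[OF W])
  also have "(\<integral>\<^sup>+ y. ennreal (1 - t) * Wp W B (z - y) \<partial>\<rho>) = ennreal (1 - t) * (\<integral>\<^sup>+ y. Wp W B (z - y) \<partial>\<rho>)"
    by (rule nn_integral_cmult) (rule g_meas[OF W P])
  finally show ?thesis .
qed

lemma sig_far:
  assumes W: "W_hyps W" and B: "0 \<le> B" "\<forall>x. - ereal B \<le> W x" and T: "torus_prob \<rho>"
    and t: "0 < t" "t < 1" and e: "0 < \<epsilon>" "3 * \<epsilon> \<le> r"
    and cv: "\<forall>a u. 0 \<le> u \<longrightarrow> 0 < a - u \<longrightarrow> a + u < 1 \<longrightarrow>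
     2 * real_of_ereal (W a) + C1 * u\<^sup>2 \<le> real_of_ereal (W (a - u)) + real_of_ereal (W (a + u))"
    and z: "r \<le> frac (z - x0)" "frac (z - x0) \<le> 1 - r" and C1: "0 \<le> C1"
  shows "(\<integral>\<^sup>+ y. Wp W B (z - y) \<partial>\<rho>) + ennreal (t * C1 * \<epsilon>\<^sup>2 / 2) * emeasure \<rho> (Uset x0 \<epsilon>)
    \<le> (\<integral>\<^sup>+ y. Wp W B (z - y) \<partial>sig \<rho> x0 \<epsilon> t)"
proof -
  define c where "c = t * C1 * \<epsilon>\<^sup>2 / 2"
  have c0: "0 \<le> c" unfolding c_def using t C1 by simp
  have P: "sets \<rho> = sets borel" using T unfolding torus_prob_def by auto
  have [measurable]: "Wp W B \<in> borel_measurable borel" by (rule Wp_meas[OF W])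
  have Ub: "Uset x0 \<epsilon> \<in> sets \<rho>" using P by simp
  have pt: "Wp W B (z - y) + ennreal c * indicator (Uset x0 \<epsilon>) y \<le>
     ennreal (t/2) * Wp W B (z - frac (y + (if y \<in> Uset x0 \<epsilon> then \<epsilon> else 0)))
     + ennreal (t/2) * Wp W B (z - frac (y + (if y \<in> Uset x0 \<epsilon> then - \<epsilon> else 0)))
     + ennreal (1 - t) * Wp W B (z - frac y)" for y
  proof (cases "y \<in> Uset x0 \<epsilon>")
    case False
    then show ?thesis using enn_comb_id[OF t, of "Wp W B (z - y)"] by (simp add: Wp_frac[OF W])
  next
    case True
    then obtain k :: int where k: "dist (x0 + of_int k) y < \<epsilon>" unfolding Uset_def by auto
    define v where "v = y - x0 - of_int k"
    have v: "\<bar>v\<bar> < \<epsilon>" using k unfolding v_def dist_real_def by (simp add: abs_minus_commute algebra_simps)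
    define q where "q = frac (z - x0)"
    define a where "a = q - v"
    have a1: "0 < a - \<epsilon>" "a + \<epsilon> < 1" using z v e unfolding a_def q_def by linarith+
    have zi: "(z - y) - a \<in> \<int>"
    proof -
      have "(z - y) - a = of_int (floor (z - x0) - k)"
        unfolding a_def q_def v_def frac_def by simp
      then show ?thesis by simp
    qed
    have w1: "Wp W B (z - frac (y + \<epsilon>)) = Wp W B (a - \<epsilon>)"
    proof -
      have "Wp W B (z - frac (y + \<epsilon>)) = Wp W B (z - (y + \<epsilon>))" by (rule Wp_frac[OF W])
      also have "\<dots> = Wp W B (a - \<epsilon>)" by (rule Wp_per[OF W]) (use zi in \<open>simp add: algebra_simps\<close>)
      finally show ?thesis .
    qed
    have w2: "Wp W B (z - frac (y + - \<epsilon>)) = Wp W B (a + \<epsilon>)"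
    proof -
      have "Wp W B (z - frac (y + - \<epsilon>)) = Wp W B (z - (y + - \<epsilon>))" by (rule Wp_frac[OF W])
      also have "\<dots> = Wp W B (a + \<epsilon>)" by (rule Wp_per[OF W]) (use zi in \<open>simp add: algebra_simps\<close>)
      finally show ?thesis .
    qed
    have w0: "Wp W B (z - frac y) = Wp W B a"
    proof -
      have "Wp W B (z - frac y) = Wp W B (z - y)" by (rule Wp_frac[OF W])
      also have "\<dots> = Wp W B a" by (rule Wp_per[OF W]) (use zi in simp)
      finally show ?thesis .
    qed
    have w0': "Wp W B (z - y) = Wp W B a" by (rule Wp_per[OF W]) (use zi in simp)
    have ni: "a - \<epsilon> \<notin> \<int>" "a + \<epsilon> \<notin> \<int>" "a \<notin> \<int>"
      by (rule Ints_01; use a1 e in linarith)+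
    define X0 where "X0 = real_of_ereal (W a) + B"
    define X1 where "X1 = real_of_ereal (W (a - \<epsilon>)) + B"
    define X2 where "X2 = real_of_ereal (W (a + \<epsilon>)) + B"
    have X: "0 \<le> X0" "0 \<le> X1" "0 \<le> X2" unfolding X0_def X1_def X2_def using rW_ge[OF W B(2) B(1)] by auto
    have D: "2 * real_of_ereal (W a) + C1 * \<epsilon>\<^sup>2 \<le> real_of_ereal (W (a - \<epsilon>)) + real_of_ereal (W (a + \<epsilon>))"
      using cv a1 e by auto
    have "t/2 * (C1 * \<epsilon>\<^sup>2) \<le> t/2 * (X1 + X2 - 2 * X0)"
      by (rule mult_left_mono) (use D t in \<open>auto simp: X0_def X1_def X2_def\<close>)
    moreover have "t/2 * X1 + t/2 * X2 + (1 - t) * X0 - X0 = t/2 * (X1 + X2 - 2 * X0)"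
      by (simp add: algebra_simps)
    ultimately have ineq: "X0 + c \<le> t/2 * X1 + t/2 * X2 + (1 - t) * X0"
      unfolding c_def by (simp add: algebra_simps)
    have "ennreal X0 + ennreal c \<le> ennreal (t/2) * ennreal X1 + ennreal (t/2) * ennreal X2 + ennreal (1 - t) * ennreal X0"
      by (rule enn_comb[OF X t c0 ineq])
    moreover have "Wp W B a = ennreal X0" unfolding X0_def by (rule Wp_fin[OF W ni(3) B(2)])
    moreover have "Wp W B (a - \<epsilon>) = ennreal X1" unfolding X1_def by (rule Wp_fin[OF W ni(1) B(2)])
    moreover have "Wp W B (a + \<epsilon>) = ennreal X2" unfolding X2_def by (rule Wp_fin[OF W ni(2) B(2)])
    ultimately show ?thesis using True w1 w2 w0 w0' by simp
  qed
  have "(\<integral>\<^sup>+ y. Wp W B (z - y) \<partial>\<rho>) + ennreal c * emeasure \<rho> (Uset x0 \<epsilon>)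
      = (\<integral>\<^sup>+ y. Wp W B (z - y) \<partial>\<rho>) + (\<integral>\<^sup>+ y. ennreal c * indicator (Uset x0 \<epsilon>) y \<partial>\<rho>)"
    using nn_integral_cmult_indicator[OF Ub, of c] by simp
  also have "\<dots> = (\<integral>\<^sup>+ y. Wp W B (z - y) + ennreal c * indicator (Uset x0 \<epsilon>) y \<partial>\<rho>)"
    by (rule nn_integral_add[symmetric]) (use g_meas[OF W P] Ub in auto)
  also have "\<dots> \<le> (\<integral>\<^sup>+ y.
     ennreal (t/2) * Wp W B (z - frac (y + (if y \<in> Uset x0 \<epsilon> then \<epsilon> else 0)))
     + ennreal (t/2) * Wp W B (z - frac (y + (if y \<in> Uset x0 \<epsilon> then - \<epsilon> else 0)))
     + ennreal (1 - t) * Wp W B (z - frac y) \<partial>\<rho>)"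
    by (rule nn_integral_mono) (rule pt)
  also have "\<dots> = (\<integral>\<^sup>+ y. Wp W B (z - y) \<partial>sig \<rho> x0 \<epsilon> t)"
    by (rule sig_integral[OF T t, symmetric]) measurable
  finally show ?thesis unfolding c_def .
qed

lemma ereal_enn_less:
  assumes "ereal c < enn2ereal G - ereal B" "0 \<le> c + B"
  shows "ennreal (c + B) < G"
proof (cases "G = top")
  case True then show ?thesis by (simp add: top.not_eq_extremum)
next
  case False
  then obtain gr where g: "G = ennreal gr" "0 \<le> gr" using ennreal_cases[of G] by auto
  then have "c + B < gr" using assms(1) by simp
  then show ?thesis using g assms(2) by (simp add: ennreal_less_iff)
qed

lemma real_key:
  fixes a b P Q :: real
  assumes "0 \<le> a" "0 < b" "0 < P" "P \<le> Q"
  shows "(a - b) / Q < a / P"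
proof -
  have Q: "0 < Q" using assms by simp
  have "(a - b) * P < a * P" using assms by simp
  also have "a * P \<le> a * Q" using assms by (intro mult_left_mono) auto
  finally have "(a - b) * P < a * Q" .
  then show ?thesis using Q assms(3) by (simp add: field_simps)
qed

lemma supp_sub_Uset:
  "frac ` ball x0 \<epsilon> \<subseteq> Uset x0 \<epsilon>"
proof
  fix y assume "y \<in> frac ` ball x0 \<epsilon>"
  then obtain p where p: "dist x0 p < \<epsilon>" "y = frac p" by auto
  have "dist (x0 + of_int (- floor p)) y = dist x0 p"
    unfolding p(2) frac_def dist_real_def by (simp add: algebra_simps)
  then have "dist (x0 + of_int (- floor p)) y < \<epsilon>" using p(1) by simp
  then show "y \<in> Uset x0 \<epsilon>" unfolding Uset_def by (auto simp del: of_int_minus)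
qed

theorem corollary3p5:
  fixes W :: "real \<Rightarrow> ereal" and \<alpha> d M :: real and \<rho> :: "real measure"
  assumes "W_hyps W"
    and "\<alpha> \<ge> 0" and "0 < d" and "d \<le> 1"
    and "\<rho> \<in> M_D_ge d" and "\<forall>\<sigma>\<in>M_D_ge d. GG \<alpha> W \<rho> \<le> GG \<alpha> W \<sigma>"
    and "even_meas \<rho>"
    and "0 \<le> M" and "2 * M \<le> 1"
    and "DD \<rho> = measure \<rho> (frac ` {-M..M}) - 2 * M"
  shows "\<forall>x \<in> supp_T \<rho> - {frac M, frac (- M)}. conv W \<rho> x \<le> ess_inf_T (conv W \<rho>)"
proof (intro ballI)
  note W = assms(1)
  fix x0 assume x0: "x0 \<in> supp_T \<rho> - {frac M, frac (- M)}"
  show "conv W \<rho> x0 \<le> ess_inf_T (conv W \<rho>)"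
  proof (rule ccontr)
    assume "\<not> conv W \<rho> x0 \<le> ess_inf_T (conv W \<rho>)"
    then have lt: "ess_inf_T (conv W \<rho>) < conv W \<rho> x0" by simp
    have T: "torus_prob \<rho>" and Dd: "d \<le> DD \<rho>" using assms(5) unfolding M_D_ge_def by auto
    have P: "prob_space \<rho>" "sets \<rho> = sets borel" using T unfolding torus_prob_def by auto
    interpret \<rho>: prob_space \<rho> by (rule P(1))
    obtain B where B: "0 \<le> B" "\<forall>x. - ereal B \<le> W x" using W_bdd[OF W] by blast
    obtain C1 where C1: "C1 > 0" and cv: "\<forall>a u. 0 \<le> u \<longrightarrow> 0 < a - u \<longrightarrow> a + u < 1 \<longrightarrow>
     2 * real_of_ereal (W a) + C1 * u\<^sup>2 \<le> real_of_ereal (W (a - u)) + real_of_ereal (W (a + u))"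
      using W_convex[OF W] by blast
    define g where "g z = (\<integral>\<^sup>+ y. Wp W B (z - y) \<partial>\<rho>)" for z
    have feq: "conv W \<rho> z = enn2ereal (g z) - ereal B" for z
      unfolding g_def by (rule conv_eq[OF W B P])
    define m where "m = ess_inf_T (conv W \<rho>)"
    have lowz: "ereal (- B) \<le> enn2ereal (g z) - ereal B" for z
      by (rule ereal_enn_le2) simp_all
    have mlow: "- ereal B \<le> m" unfolding m_def
      by (rule ess_inf_ge) (use lowz in \<open>auto simp: feq\<close>)
    have mup: "m \<le> 0" unfolding m_def by (rule ess_inf_le0[OF W B T])
    obtain mr where mr: "m = ereal mr" using mlow mup by (cases m) auto
    have mr1: "- B \<le> mr" "mr \<le> 0" using mlow mup mr by auto
    define L0 where "L0 = mr + B"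
    have L0: "0 \<le> L0" unfolding L0_def using mr1 by simp
    have "ereal mr < enn2ereal (g x0) - ereal B" using lt feq mr unfolding m_def by simp
    then have gx0: "ennreal L0 < g x0" unfolding L0_def by (rule ereal_enn_less) (use L0 in \<open>simp add: L0_def\<close>)
    obtain \<delta> where \<delta>: "0 < \<delta>" "ennreal (L0 + \<delta>) < g x0"
    proof (cases "g x0 = top")
      case True
      then show ?thesis using that[of 1] by (simp add: top.not_eq_extremum)
    next
      case False
      then obtain gr where gr: "g x0 = ennreal gr" "0 \<le> gr" using ennreal_cases[of "g x0"] by auto
      then have "L0 < gr" using gx0 L0 by (simp add: ennreal_less_iff)
      show ?thesis
      proof (rule that[of "(gr - L0) / 2"])
        show "0 < (gr - L0) / 2" using \<open>L0 < gr\<close> by simp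
        have "ennreal (L0 + (gr - L0) / 2) < ennreal gr"
          by (subst ennreal_less_iff) (use \<open>L0 < gr\<close> L0 in \<open>auto simp: field_simps\<close>)
        then show "ennreal (L0 + (gr - L0) / 2) < g x0" using gr(1) by (simp only:)
      qed
    qed
    obtain r0 where r0: "r0 > 0" "\<forall>x'. \<bar>x' - x0\<bar> < r0 \<longrightarrow> ennreal (L0 + \<delta>) < g x'"
      using g_lsc[OF W P(2) \<delta>(2)[unfolded g_def]] unfolding g_def by blast
    have x0s: "0 \<le> x0" "x0 < 1" "\<And>e. e > 0 \<Longrightarrow> emeasure \<rho> (frac ` ball x0 e) > 0"
      "x0 \<noteq> frac M" "x0 \<noteq> frac (- M)"
      using x0 unfolding supp_T_def by auto
    obtain \<eta> where \<eta>: "\<eta> > 0" "(\<forall>w. \<bar>w\<bar> < \<eta> \<longrightarrow> x0 + w \<in> Aset M) \<or> (\<forall>w. \<bar>w\<bar> < \<eta> \<longrightarrow> x0 + w \<notin> Aset M)"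
      using arc_sep[OF x0s(1,2) assms(8,9) x0s(4,5)] by blast
    define \<epsilon> where "\<epsilon> = min (r0 / 3) (\<eta> / 2)"
    define r where "r = 3 * \<epsilon>"
    have e: "0 < \<epsilon>" "3 * \<epsilon> \<le> r" "r \<le> r0" "2 * \<epsilon> \<le> \<eta>" unfolding \<epsilon>_def r_def using r0 \<eta> by auto
    have sep: "(\<forall>w. \<bar>w\<bar> < 2 * \<epsilon> \<longrightarrow> x0 + w \<in> Aset M) \<or> (\<forall>w. \<bar>w\<bar> < 2 * \<epsilon> \<longrightarrow> x0 + w \<notin> Aset M)"
      using \<eta>(2) e(4) by force
    have Ub: "Uset x0 \<epsilon> \<in> sets \<rho>" using P by simp
    have "0 < emeasure \<rho> (frac ` ball x0 \<epsilon>)" by (rule x0s(3)[OF e(1)])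
    also have "\<dots> \<le> emeasure \<rho> (Uset x0 \<epsilon>)" by (rule emeasure_mono[OF supp_sub_Uset Ub])
    finally have Upos: "0 < emeasure \<rho> (Uset x0 \<epsilon>)" .
    define mu where "mu = measure \<rho> (Uset x0 \<epsilon>)"
    have mueq: "emeasure \<rho> (Uset x0 \<epsilon>) = ennreal mu" unfolding mu_def by (rule \<rho>.emeasure_eq_measure)
    have mu: "0 < mu" using Upos mueq by simp
    define \<kappa> where "\<kappa> = C1 * \<epsilon>\<^sup>2 / 2 * mu"
    have \<kappa>: "0 < \<kappa>" unfolding \<kappa>_def using C1 e mu by simp
    define t where "t = \<delta> / (L0 + \<delta> + \<kappa>)"
    have t: "0 < t" "t < 1" unfolding t_def using \<delta> L0 \<kappa> by (auto simp: field_simps)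
    have teq: "(1 - t) * (L0 + \<delta>) = L0 + t * \<kappa>"
      unfolding t_def using \<delta> L0 \<kappa> by (simp add: field_simps)
    define \<sigma> where "\<sigma> = sig \<rho> x0 \<epsilon> t"
    have Ts: "torus_prob \<sigma>" unfolding \<sigma>_def by (rule sig_torus[OF T])
    have Ps: "prob_space \<sigma>" "sets \<sigma> = sets borel" using Ts unfolding torus_prob_def by auto
    define gs where "gs z = (\<integral>\<^sup>+ y. Wp W B (z - y) \<partial>\<sigma>)" for z
    have fseq: "conv W \<sigma> z = enn2ereal (gs z) - ereal B" for z
      unfolding gs_def by (rule conv_eq[OF W B Ps])
    have aeg: "AE z in lborel. z \<in> {0..<1} \<longrightarrow> ennreal L0 \<le> g z"
      using ess_inf_AE[of "conv W \<rho>" mr] mr unfolding m_def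
    proof -
      have "AE z in lborel. z \<in> {0..<1} \<longrightarrow> ereal mr \<le> conv W \<rho> z"
        by (rule ess_inf_AE) (use mr in \<open>simp add: m_def\<close>)
      then show ?thesis
      proof eventually_elim
        case (elim z)
        show ?case
        proof
          assume "z \<in> {0..<1}"
          then have "ereal mr \<le> enn2ereal (g z) - ereal B" using elim feq by simp
          then show "ennreal L0 \<le> g z" unfolding L0_def by (rule ereal_enn_le1) (use L0 in \<open>simp add: L0_def\<close>)
        qed
      qed
    qed
    have gs_bound: "ennreal (L0 + t * \<kappa>) \<le> gs z" if gz: "ennreal L0 \<le> g z" for z
    proof (cases "r \<le> frac (z - x0) \<and> frac (z - x0) \<le> 1 - r")
      case True
      have "g z + ennreal (t * C1 * \<epsilon>\<^sup>2 / 2) * emeasure \<rho> (Uset x0 \<epsilon>) \<le> gs z"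
        unfolding g_def gs_def \<sigma>_def
        by (rule sig_far[OF W B T t e(1,2) cv]) (use True C1 in auto)
      moreover have "ennreal (t * C1 * \<epsilon>\<^sup>2 / 2) * emeasure \<rho> (Uset x0 \<epsilon>) = ennreal (t * \<kappa>)"
        unfolding mueq \<kappa>_def using t C1 mu by (simp add: ennreal_mult[symmetric] algebra_simps)
      moreover have "ennreal (L0 + t * \<kappa>) = ennreal L0 + ennreal (t * \<kappa>)"
        using L0 t \<kappa> by simp
      ultimately show ?thesis using gz by (metis add_right_mono order.trans)
    next
      case False
      define q where "q = frac (z - x0)"
      have q: "0 \<le> q" "q < 1" unfolding q_def by (auto simp: frac_lt_1)
      obtain w where w: "\<bar>w\<bar> < r" "z - (x0 + w) \<in> \<int>"
      proof (cases "q < r")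
        case True
        show ?thesis
        proof (rule that[of q])
          show "\<bar>q\<bar> < r" using True q by simp
          show "z - (x0 + q) \<in> \<int>" unfolding q_def frac_def by simp
        qed
      next
        case False
        then have "1 - r < q" using \<open>\<not> (r \<le> frac (z - x0) \<and> frac (z - x0) \<le> 1 - r)\<close> unfolding q_def by auto
        show ?thesis
        proof (rule that[of "q - 1"])
          show "\<bar>q - 1\<bar> < r" using \<open>1 - r < q\<close> q by simp
          have "z - (x0 + (q - 1)) = of_int (floor (z - x0) + 1)" unfolding q_def frac_def by simp
          then show "z - (x0 + (q - 1)) \<in> \<int>" by (simp only: Ints_of_int)
        qed
      qed
      have "g z = g (x0 + w)" unfolding g_def by (rule g_per[OF W w(2)])
      moreover have "ennreal (L0 + \<delta>) < g (x0 + w)" using r0(2) w(1) e(3) by simp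
      ultimately have gz2: "ennreal (L0 + \<delta>) \<le> g z" by simp
      have "ennreal (1 - t) * g z \<le> gs z"
        unfolding g_def gs_def \<sigma>_def by (rule sig_near[OF W T t])
      moreover have "ennreal ((1 - t) * (L0 + \<delta>)) \<le> ennreal (1 - t) * g z"
        using gz2 t L0 \<delta> by (simp add: ennreal_mult mult_left_mono)
      ultimately show ?thesis unfolding teq by simp
    qed
    have aes: "AE z in lborel. z \<in> {0..<1} \<longrightarrow> ereal (mr + t * \<kappa>) \<le> conv W \<sigma> z"
      using aeg
    proof eventually_elim
      case (elim z)
      show ?case
      proof
        assume "z \<in> {0..<1}"
        then have "ennreal (L0 + t * \<kappa>) \<le> gs z" using elim gs_bound by blast
        then have "ennreal (mr + t * \<kappa> + B) \<le> gs z" unfolding L0_def by (simp add: algebra_simps)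
        then show "ereal (mr + t * \<kappa>) \<le> conv W \<sigma> z" unfolding fseq
        proof (rule ereal_enn_le2)
          have "0 \<le> t * \<kappa>" using t \<kappa> by simp
          then show "0 \<le> mr + t * \<kappa> + B" using L0 unfolding L0_def by linarith
        qed
      qed
    qed
    then have ms: "ereal (mr + t * \<kappa>) \<le> ess_inf_T (conv W \<sigma>)" by (rule ess_inf_ge)
    have "- ess_inf_T (conv W \<sigma>) \<le> - ereal (mr + t * \<kappa>)" using ms by (simp only: ereal_minus_le_minus)
    then have Hs: "HH W \<sigma> \<le> ereal (- (mr + t * \<kappa>))" unfolding HH_def by simp
    have Hr: "HH W \<rho> = ereal (- mr)" unfolding HH_def using mr unfolding m_def by simp
    define A where "A = frac ` {-M..M}"
    have em: "emeasure \<rho> A \<le> emeasure \<sigma> A"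
      unfolding A_def \<sigma>_def by (rule sig_arc_ge[OF T t e(1) sep])
    interpret \<sigma>: prob_space \<sigma> by (rule Ps(1))
    have meas: "measure \<rho> A \<le> measure \<sigma> A"
      using em by (simp add: \<rho>.emeasure_eq_measure \<sigma>.emeasure_eq_measure)
    have DDs: "measure \<sigma> A - 2 * M \<le> DD \<sigma>"
    proof -
      have "measure \<sigma> (frac ` {fst (-M, M)..snd (-M, M)}) - (snd (-M, M) - fst (-M, M))
          \<le> (SUP ab \<in> {(a, b). a \<le> b \<and> b - a \<le> 1}. measure \<sigma> (frac ` {fst ab..snd ab}) - (snd ab - fst ab))"
      proof (rule cSUP_upper)
        show "(-M, M) \<in> {(a, b). a \<le> b \<and> b - a \<le> 1}" using assms(8,9) by simp
        show "bdd_above ((\<lambda>ab. measure \<sigma> (frac ` {fst ab..snd ab}) - (snd ab - fst ab)) ` {(a, b). a \<le> b \<and> b - a \<le> 1})"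
        proof (rule bdd_aboveI2)
          fix ab assume "ab \<in> {(a, b). a \<le> b \<and> b - a \<le> (1::real)}"
          then have "0 \<le> snd ab - fst ab" by auto
          moreover have "measure \<sigma> (frac ` {fst ab..snd ab}) \<le> 1" by simp
          ultimately show "measure \<sigma> (frac ` {fst ab..snd ab}) - (snd ab - fst ab) \<le> 1" by linarith
        qed
      qed
      then show ?thesis unfolding DD_def A_def by simp
    qed
    have Dle: "DD \<rho> \<le> DD \<sigma>" using assms(10) meas DDs unfolding A_def by linarith
    have Dr: "0 < DD \<rho>" using Dd assms(3) by linarith
    have sM: "\<sigma> \<in> M_D_ge d" unfolding M_D_ge_def using Ts Dd Dle by auto
    have Pp: "0 < DD \<rho> powr \<alpha>" using Dr by simp
    have PQ: "DD \<rho> powr \<alpha> \<le> DD \<sigma> powr \<alpha>" by (rule powr_mono2[OF assms(2)]) (use Dr Dle in auto)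
    have Qp: "0 < DD \<sigma> powr \<alpha>" using Pp PQ by linarith
    have "GG \<alpha> W \<sigma> \<le> ereal (- (mr + t * \<kappa>)) / ereal (DD \<sigma> powr \<alpha>)"
      unfolding GG_def by (rule ereal_divide_right_mono[OF Hs]) (use Qp in simp)
    also have "\<dots> = ereal ((- mr - t * \<kappa>) / DD \<sigma> powr \<alpha>)" using Qp by simp
    also have "\<dots> < ereal (- mr / DD \<rho> powr \<alpha>)"
      using real_key[of "- mr" "t * \<kappa>" "DD \<rho> powr \<alpha>" "DD \<sigma> powr \<alpha>"] mr1 t \<kappa> Pp PQ by simp
    also have "\<dots> = GG \<alpha> W \<rho>" unfolding GG_def Hr using Pp by simp
    finally have "GG \<alpha> W \<sigma> < GG \<alpha> W \<rho>" .
    moreover have "GG \<alpha> W \<rho> \<le> GG \<alpha> W \<sigma>" using assms(6) sM by blast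
    ultimately show False by simp
  qed
qed


end
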